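(* Let $\alpha\in(0,1)$, $p>0$, and let $(X_k)_{k\ge1}$ be real numbers. For integers $l\ge0$, $r\ge0$ with $(l,r)\ne(0,0)$: $$S^{(1)}(l,r)=\sum_{f=1}^{r}\sum_{u=0}^{l-r}S^{(1)}_1(l,r,u,f),\qquad S^{(2)}(l,r)=\sum_{f=1}^{r}\sum_{u=0}^{l-r}S^{(2)}_1(l,r,u,f),$$ and, for all $l,r,u,f$ with $1\le f\le r$, $0\le u\le l-r$, $$S^{(1)}_1(l,r,u,f)=\alpha^{-1}\binom{r-1}{f-1}S^{(1)}_2(f+u,f)\,S^{(1)}(l-u-f,r-f),$$ $$S^{(2)}_1(l,r,u,f)=(1-\alpha)^{-1}\binom{r-1}{f-1}S^{(2)}_2(f+u,f)\,S^{(2)}(l-u-f,r-f).$$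
   Context: A closed walk of length $k$ is a sequence $w=(w_1,\dots,w_k,w_{k+1})$ of positive integers with $w_{k+1}=w_1$; its skeleton $G_w$ is the simple undirected graph with vertex set $V_w=\{w_1,\dots,w_k\}$ and edge set $E_w=\{\{w_i,w_{i+1}\}: 1\le i\le k\}$, and for $e\in E_w$, $n_w(e)$ is the number of indices $i$ with $\{w_i,w_{i+1}\}=e$. A walk is minimal if $w_1=1$ and each vertex appearing for the first time receives the number equal to the number of distinct vertices already visited plus $1$. An essential walk is a minimal closed walk whose skeleton is a tree (its length is then even, $2l$; the walk of length $0$, consisting of the single vertex $1$, is included). The root is $\rho=1$ and, for a walk of positive length, $\nu=w_2=2$. For an essential walk $w$, let $\beta(w)$ be the number of vertices of $G_w$ at even graph distance from the root, and define the weights $$\theta_1(w)=\alpha^{\beta(w)}(1-\alpha)^{|V_w|-\beta(w)}\prod_{e\in E_w}pX_{n_w(e)},\qquad \theta_2(w)=(1-\alpha)^{\beta(w)}\alpha^{|V_w|-\beta(w)}\prod_{e\in E_w}pX_{n_w(e)}.$$ Let $\Lambda(l,r)$ be the set of essential walks of length $2l$ having exactly $r$ steps that start at the root (i.e. $r=\#\{i\le 2l: w_i=1\}$), and $S^{(j)}(l,r)=\sum_{w\in\Lambda(l,r)}\theta_j(w)$, $j=1,2$. For an essential walk of positive length, removing the edge $\{1,2\}$ from $G_w$ leaves two trees; let $G_2$ be the one containing $2$. Let $u$ be half the number of steps of $w$ along edges of $G_2$ and $f$ the number of steps $1\to2$ of $w$. Let $\Lambda_1(l,r,u,f)$ be the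 set of walks in $\Lambda(l,r)$ with these parameters $u,f$, and $S^{(j)}_1(l,r,u,f)=\sum_{w\in\Lambda_1(l,r,u,f)}\theta_j(w)$. Let $\Lambda_2(l,r)$ be the set of walks in $\Lambda(l,r)$ whose skeleton has exactly one edge incident to the root, and $S^{(j)}_2(l,r)=\sum_{w\in\Lambda_2(l,r)}\theta_j(w)$. *)

theory Defs
  imports Complex_Main
begin

text \<open>A closed walk (w_1,...,w_k,w_{k+1}) is represented by the list
  [w_1,...,w_{k+1}] of positive naturals with last = first; its length is k.\<close>

definition closed_walk :: "nat list \<Rightarrow> bool" where
  "closed_walk w \<longleftrightarrow> w \<noteq> [] \<and> last w = hd w \<and> (\<forall>x\<in>set w. 0 < x)"

definition minimal_walk :: "nat list \<Rightarrow> bool" where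
  "minimal_walk w \<longleftrightarrow> closed_walk w \<and> hd w = 1 \<and>
     (\<forall>i<length w. w ! i \<notin> set (take i w) \<longrightarrow> w ! i = card (set (take i w)) + 1)"

definition wverts :: "nat list \<Rightarrow> nat set" where
  "wverts w = set w"

definition wedges :: "nat list \<Rightarrow> nat set set" where
  "wedges w = {{w ! i, w ! (i + 1)} | i. i + 1 < length w}"

definition nmult :: "nat list \<Rightarrow> nat set \<Rightarrow> nat" where
  "nmult w e = card {i. i + 1 < length w \<and> {w ! i, w ! (i + 1)} = e}"

definition adj :: "'a set set \<Rightarrow> ('a \<times> 'a) set" where
  "adj E = {(x, y). {x, y} \<in> E \<and> x \<noteq> y}"

definition simple_graph :: "'a set \<Rightarrow> 'a set set \<Rightarrow> bool" where
  "simple_graph V E \<longleftrightarrow> finite V \<and> (\<forall>e\<in>E. card e = 2 \<and> e \<subseteq> V)"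

definition connected_graph :: "'a set \<Rightarrow> 'a set set \<Rightarrow> bool" where
  "connected_graph V E \<longleftrightarrow> (\<forall>x\<in>V. \<forall>y\<in>V. (x, y) \<in> (adj E)\<^sup>*)"

definition has_cycle :: "'a set \<Rightarrow> 'a set set \<Rightarrow> bool" where
  "has_cycle V E \<longleftrightarrow> (\<exists>cs. 3 \<le> length cs \<and> distinct cs \<and> set cs \<subseteq> V \<and>
     (\<forall>i<length cs. {cs ! i, cs ! ((i + 1) mod length cs)} \<in> E))"

definition is_tree :: "'a set \<Rightarrow> 'a set set \<Rightarrow> bool" where
  "is_tree V E \<longleftrightarrow> V \<noteq> {} \<and> simple_graph V E \<and> connected_graph V E \<and> \<not> has_cycle V E"

definition gdist :: "'a set set \<Rightarrow> 'a \<Rightarrow> 'a \<Rightarrow> nat" where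
  "gdist E x y = (LEAST n. (x, y) \<in> (adj E) ^^ n)"

definition essential :: "nat list \<Rightarrow> bool" where
  "essential w \<longleftrightarrow> minimal_walk w \<and> is_tree (wverts w) (wedges w)"

definition beta :: "nat list \<Rightarrow> nat" where
  "beta w = card {v \<in> wverts w. even (gdist (wedges w) 1 v)}"

definition theta1 :: "real \<Rightarrow> real \<Rightarrow> (nat \<Rightarrow> real) \<Rightarrow> nat list \<Rightarrow> real" where
  "theta1 \<alpha> p X w = \<alpha> ^ beta w * (1 - \<alpha>) ^ (card (wverts w) - beta w) *
     (\<Prod>e\<in>wedges w. p * X (nmult w e))"

definition theta2 :: "real \<Rightarrow> real \<Rightarrow> (nat \<Rightarrow> real) \<Rightarrow> nat list \<Rightarrow> real" where
  "theta2 \<alpha> p X w = (1 - \<alpha>) ^ beta w * \<alpha> ^ (card (wverts w) - beta w) *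
     (\<Prod>e\<in>wedges w. p * X (nmult w e))"

definition Lam :: "nat \<Rightarrow> nat \<Rightarrow> nat list set" where
  "Lam l r = {w. essential w \<and> length w = 2 * l + 1 \<and> card {i. i < 2 * l \<and> w ! i = 1} = r}"

definition G2edges :: "nat list \<Rightarrow> nat set set" where
  "G2edges w = {e \<in> wedges w - {{1, 2}}. \<forall>x\<in>e. (2, x) \<in> (adj (wedges w - {{1, 2}}))\<^sup>*}"

definition Lam1 :: "nat \<Rightarrow> nat \<Rightarrow> nat \<Rightarrow> nat \<Rightarrow> nat list set" where
  "Lam1 l r u f = {w \<in> Lam l r. 0 < l \<and>
     2 * u = card {i. i < 2 * l \<and> {w ! i, w ! (i + 1)} \<in> G2edges w} \<and>
     f = card {i. i < 2 * l \<and> w ! i = 1 \<and> w ! (i + 1) = 2}}"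

definition Lam2 :: "nat \<Rightarrow> nat \<Rightarrow> nat list set" where
  "Lam2 l r = {w \<in> Lam l r. card {e \<in> wedges w. 1 \<in> e} = 1}"

definition Ssum :: "(nat list \<Rightarrow> real) \<Rightarrow> nat list set \<Rightarrow> real" where
  "Ssum \<theta> A = (\<Sum>w\<in>A. \<theta> w)"

end

theory Submission
  imports Defs
begin

fun rpath :: "('a \<times> 'a) set \<Rightarrow> 'a list \<Rightarrow> bool" where
  "rpath R [] = True"
| "rpath R [x] = True"
| "rpath R (x # y # xs) = ((x, y) \<in> R \<and> rpath R (y # xs))"

lemma rpath_append2: "rpath R (ys @ zs) \<Longrightarrow> rpath R zs"
  by (induction ys) (auto elim: rpath.elims)

lemma rpath_nth: "rpath R xs \<Longrightarrow> i + 1 < length xs \<Longrightarrow> (xs ! i, xs ! (i+1)) \<in> R"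
proof (induction R xs arbitrary: i rule: rpath.induct)
  case (3 R x y xs)
  then show ?case by (cases i) auto
qed auto

lemma rtrancl_distinct_path:
  assumes "(a, b) \<in> R\<^sup>*"
  shows "\<exists>xs. xs \<noteq> [] \<and> hd xs = a \<and> last xs = b \<and> distinct xs \<and> rpath R xs"
  using assms
proof (induction rule: converse_rtrancl_induct)
  case base
  then show ?case by (intro exI[of _ "[b]"]) auto
next
  case (step x y)
  then obtain xs where xs: "xs \<noteq> []" "hd xs = y" "last xs = b" "distinct xs" "rpath R xs" by blast
  show ?case
  proof (cases "x \<in> set xs")
    case True
    then obtain ys zs where yz: "xs = ys @ x # zs" by (meson split_list)
    then show ?thesis using xs rpath_append2[of R ys "x # zs"]
      by (intro exI[of _ "x # zs"]) auto
  next
    case False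
    then show ?thesis using xs step(1)
      by (intro exI[of _ "x # xs"]) (cases xs, auto)
  qed
qed

lemma adj_iff: "(x, y) \<in> adj E \<longleftrightarrow> {x, y} \<in> E \<and> x \<noteq> y"
  by (simp add: adj_def)

lemma adj_sym: "(x, y) \<in> adj E \<Longrightarrow> (y, x) \<in> adj E"
  by (auto simp: adj_def insert_commute)

lemma adj_rtrancl_sym: "(x, y) \<in> (adj E)\<^sup>* \<Longrightarrow> (y, x) \<in> (adj E)\<^sup>*"
proof (induction rule: rtrancl_induct)
  case (step y z)
  then show ?case using adj_sym converse_rtrancl_into_rtrancl by metis
qed auto

lemma adj_mono: "E \<subseteq> F \<Longrightarrow> adj E \<subseteq> adj F"
  by (auto simp: adj_def)

lemma adj_rtrancl_mono: "E \<subseteq> F \<Longrightarrow> (x, y) \<in> (adj E)\<^sup>* \<Longrightarrow> (x, y) \<in> (adj F)\<^sup>*"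
  by (meson adj_mono rtrancl_mono subsetD)

lemma cycle_of_path:
  assumes sg: "simple_graph V E" and eE: "{a, b} \<in> E" and ab: "a \<noteq> b"
    and p: "(a, b) \<in> (adj (E - {{a, b}}))\<^sup>*"
  shows "has_cycle V E"
proof -
  obtain xs where xs: "xs \<noteq> []" "hd xs = a" "last xs = b" "distinct xs" "rpath (adj (E - {{a, b}})) xs"
    using rtrancl_distinct_path[OF p] by blast
  let ?n = "length xs"
  have stp: "i + 1 < ?n \<Longrightarrow> {xs ! i, xs ! (i+1)} \<in> E - {{a,b}} \<and> xs ! i \<noteq> xs ! (i+1)" for i
    using rpath_nth[OF xs(5)] by (auto simp: adj_def)
  have x0: "xs ! 0 = a" using xs by (simp add: hd_conv_nth)
  have xl: "xs ! (?n - 1) = b" using xs by (simp add: last_conv_nth)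
  have n2: "?n \<ge> 2"
  proof (rule ccontr)
    assume "\<not> ?n \<ge> 2"
    then have "?n = 1" using xs by (cases xs) (auto simp: Suc_le_eq)
    then show False using x0 xl ab by simp
  qed
  have n3: "?n \<ge> 3"
  proof (rule ccontr)
    assume "\<not> ?n \<ge> 3"
    then have "?n = 2" using n2 by simp
    then show False using stp[of 0] x0 xl by simp
  qed
  have edges: "\<forall>i<?n. {xs ! i, xs ! ((i + 1) mod ?n)} \<in> E"
  proof (intro allI impI)
    fix i assume i: "i < ?n"
    show "{xs ! i, xs ! ((i + 1) mod ?n)} \<in> E"
    proof (cases "i + 1 < ?n")
      case True then show ?thesis using stp[of i] by simp
    next
      case False
      then have "i = ?n - 1" using i by auto
      then have i1: "i = ?n - 1" by simp
      then have "i + 1 = ?n" using i by simp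
      then have "(i + 1) mod ?n = 0" by simp
      then show ?thesis using x0 xl eE i1 by (simp add: insert_commute)
    qed
  qed
  have sub: "set xs \<subseteq> V"
  proof
    fix x assume "x \<in> set xs"
    then obtain i where i: "i < ?n" "xs ! i = x" by (auto simp: in_set_conv_nth)
    have "{xs ! i, xs ! ((i + 1) mod ?n)} \<in> E" using edges i by blast
    then have "{xs ! i, xs ! ((i + 1) mod ?n)} \<subseteq> V" using sg unfolding simple_graph_def by blast
    then show "x \<in> V" using i by auto
  qed
  show ?thesis unfolding has_cycle_def
    using n3 xs(4) sub edges by blast
qed

lemma cycle_to_path:
  assumes sg: "simple_graph V E" and c: "has_cycle V E"
  shows "\<exists>a b. {a, b} \<in> E \<and> a \<noteq> b \<and> (a, b) \<in> (adj (E - {{a, b}}))\<^sup>*"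
proof -
  obtain cs where cs: "3 \<le> length cs" "distinct cs" "set cs \<subseteq> V"
    "\<forall>i<length cs. {cs ! i, cs ! ((i + 1) mod length cs)} \<in> E"
    using c unfolding has_cycle_def by blast
  let ?n = "length cs"
  let ?e = "{cs ! 1, cs ! 0}"
  have d: "i < ?n \<Longrightarrow> j < ?n \<Longrightarrow> cs ! i = cs ! j \<longleftrightarrow> i = j" for i j
    using cs(2) nth_eq_iff_index_eq by blast
  have "cs \<noteq> []" using cs(1) by auto
  then have eE: "?e \<in> E" using cs(4)[rule_format, of 0] cs(1) by (auto simp: insert_commute)
  have st: "k + 1 < ?n \<Longrightarrow> 1 \<le> k \<Longrightarrow> (cs ! k, cs ! (k+1)) \<in> adj (E - {?e})" for k
  proof -
    assume k: "k + 1 < ?n" "1 \<le> k"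
    have "{cs ! k, cs ! (k+1)} \<in> E" using cs(4)[rule_format, of k] k by simp
    moreover have "{cs ! k, cs ! (k+1)} \<noteq> ?e"
    proof
      assume "{cs ! k, cs ! (k+1)} = ?e"
      then have "cs ! (k+1) \<in> ?e" by auto
      then have "cs ! (k+1) = cs ! 1 \<or> cs ! (k+1) = cs ! 0" by auto
      moreover have "cs ! (k+1) \<noteq> cs ! 1"
        by (subst nth_eq_iff_index_eq[OF cs(2)]) (use k cs(1) in auto)
      moreover have "cs ! (k+1) \<noteq> cs ! 0"
        by (subst nth_eq_iff_index_eq[OF cs(2)]) (use k cs(1) in auto)
      ultimately show False by auto
    qed
    moreover have "cs ! k \<noteq> cs ! (k+1)"
      by (subst nth_eq_iff_index_eq[OF cs(2)]) (use k in auto)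
    ultimately show ?thesis by (simp add: adj_def)
  qed
  have reach: "1 \<le> k \<Longrightarrow> k < ?n \<Longrightarrow> (cs ! 1, cs ! k) \<in> (adj (E - {?e}))\<^sup>*" for k
  proof (induction k)
    case 0 then show ?case by simp
  next
    case (Suc k)
    show ?case
    proof (cases "k = 0")
      case True then show ?thesis by simp
    next
      case False
      then show ?thesis using Suc st[of k] rtrancl_into_rtrancl by auto
    qed
  qed
  have last: "(cs ! (?n - 1), cs ! 0) \<in> adj (E - {?e})"
  proof -
    have "Suc (?n - 1) = ?n" using cs(1) by simp
    then have "{cs ! (?n - 1), cs ! 0} \<in> E" using cs(4)[rule_format, of "?n - 1"] cs(1) by simp
    moreover have "{cs ! (?n - 1), cs ! 0} \<noteq> ?e"
    proof
      assume "{cs ! (?n - 1), cs ! 0} = ?e"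
      then have "cs ! (?n - 1) \<in> ?e" by auto
      then have "cs ! (?n - 1) = cs ! 1 \<or> cs ! (?n - 1) = cs ! 0" by auto
      moreover have "cs ! (?n - 1) \<noteq> cs ! 1"
        by (subst nth_eq_iff_index_eq[OF cs(2)]) (use cs(1) in auto)
      moreover have "cs ! (?n - 1) \<noteq> cs ! 0"
        by (subst nth_eq_iff_index_eq[OF cs(2)]) (use cs(1) in auto)
      ultimately show False by auto
    qed
    moreover have "cs ! (?n - 1) \<noteq> cs ! 0"
      by (subst nth_eq_iff_index_eq[OF cs(2)]) (use cs(1) in auto)
    ultimately show ?thesis by (simp add: adj_def)
  qed
  have "(cs ! 1, cs ! 0) \<in> (adj (E - {?e}))\<^sup>*"
  proof -
    have "(cs ! 1, cs ! (?n - 1)) \<in> (adj (E - {?e}))\<^sup>*" using reach[of "?n - 1"] cs(1) by simp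
    then show ?thesis using last by (rule rtrancl_into_rtrancl)
  qed
  moreover have "cs ! 1 \<noteq> cs ! 0"
    by (subst nth_eq_iff_index_eq[OF cs(2)]) (use cs(1) in auto)
  ultimately show ?thesis using eE by metis
qed

lemma has_cycle_mono: "has_cycle V E \<Longrightarrow> V \<subseteq> V' \<Longrightarrow> E \<subseteq> E' \<Longrightarrow> has_cycle V' E'"
  unfolding has_cycle_def by blast

lemma has_cycle_image:
  assumes inj: "inj_on g V" and c: "has_cycle V E"
  shows "has_cycle (g ` V) ((`) g ` E)"
proof -
  obtain cs where cs: "3 \<le> length cs" "distinct cs" "set cs \<subseteq> V"
    "\<forall>i<length cs. {cs ! i, cs ! ((i + 1) mod length cs)} \<in> E"
    using c unfolding has_cycle_def by blast
  have "distinct (map g cs)" using cs(2,3) inj by (simp add: distinct_map inj_on_subset)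
  moreover have "\<forall>i<length (map g cs). {map g cs ! i, map g cs ! ((i + 1) mod length (map g cs))} \<in> (`) g ` E"
  proof (intro allI impI)
    fix i assume i: "i < length (map g cs)"
    have "(i + 1) mod length cs < length cs" using cs(1) by (intro mod_less_divisor) auto
    then have "{map g cs ! i, map g cs ! ((i + 1) mod length (map g cs))} = g ` {cs ! i, cs ! ((i + 1) mod length cs)}"
      using i by simp
    then show "{map g cs ! i, map g cs ! ((i + 1) mod length (map g cs))} \<in> (`) g ` E"
    proof -
      have "{cs ! i, cs ! ((i + 1) mod length cs)} \<in> E" using cs(4) i by simp
      then have "g ` {cs ! i, cs ! ((i + 1) mod length cs)} \<in> (`) g ` E" by blast
      with \<open>{map g cs ! i, _} = _\<close> show ?thesis by simp
    qed
  qed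
  ultimately show ?thesis unfolding has_cycle_def using cs(1,3)
    by (intro exI[of _ "map g cs"]) auto
qed

lemma rtrancl_map_refl:
  assumes "(a, b) \<in> R\<^sup>*" and "\<And>x y. (x, y) \<in> R \<Longrightarrow> \<rho> x = \<rho> y \<or> (\<rho> x, \<rho> y) \<in> S"
  shows "(\<rho> a, \<rho> b) \<in> S\<^sup>*"
  using assms(1)
proof (induction rule: rtrancl_induct)
  case (step y z)
  then show ?case using assms(2)[of y z] rtrancl_into_rtrancl by metis
qed auto

lemma glue_half:
  assumes sg1: "simple_graph V1 E1" and sg2: "simple_graph V2 E2"
    and int: "V1 \<inter> V2 \<subseteq> {c}" and nc: "\<not> has_cycle V1 E1"
    and e: "{a, b} \<in> E1" "a \<noteq> b" and p: "(a, b) \<in> (adj (E1 \<union> E2 - {{a, b}}))\<^sup>*"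
  shows False
proof -
  define \<rho> where "\<rho> x = (if x \<in> V1 then x else c)" for x
  have "(\<rho> a, \<rho> b) \<in> (adj (E1 - {{a, b}}))\<^sup>*"
  proof (rule rtrancl_map_refl[OF p])
    fix x y assume xy: "(x, y) \<in> adj (E1 \<union> E2 - {{a, b}})"
    then have xy': "{x, y} \<in> E1 \<union> E2" "{x, y} \<noteq> {a, b}" "x \<noteq> y" by (auto simp: adj_def)
    show "\<rho> x = \<rho> y \<or> (\<rho> x, \<rho> y) \<in> adj (E1 - {{a, b}})"
    proof (cases "{x, y} \<in> E1")
      case True
      then have "x \<in> V1" "y \<in> V1" using sg1 by (auto simp: simple_graph_def)
      then show ?thesis using True xy' by (auto simp: \<rho>_def adj_def)
    next
      case False
      then have "{x, y} \<in> E2" using xy' by auto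
      then have "x \<in> V2" "y \<in> V2" using sg2 by (auto simp: simple_graph_def)
      then have "\<rho> x = c" "\<rho> y = c" using int by (auto simp: \<rho>_def)
      then show ?thesis by simp
    qed
  qed
  moreover have "a \<in> V1" "b \<in> V1" using e sg1 by (auto simp: simple_graph_def)
  ultimately have "(a, b) \<in> (adj (E1 - {{a, b}}))\<^sup>*" by (simp add: \<rho>_def)
  then show False using cycle_of_path[OF sg1 e] nc by blast
qed

lemma simple_graph_Un: "simple_graph V1 E1 \<Longrightarrow> simple_graph V2 E2 \<Longrightarrow> simple_graph (V1 \<union> V2) (E1 \<union> E2)"
  by (auto simp: simple_graph_def)

lemma glue_no_cycle:
  assumes sg1: "simple_graph V1 E1" and sg2: "simple_graph V2 E2"
    and int: "V1 \<inter> V2 \<subseteq> {c}" and nc1: "\<not> has_cycle V1 E1" and nc2: "\<not> has_cycle V2 E2"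
  shows "\<not> has_cycle (V1 \<union> V2) (E1 \<union> E2)"
proof
  assume "has_cycle (V1 \<union> V2) (E1 \<union> E2)"
  then obtain a b where ab: "{a, b} \<in> E1 \<union> E2" "a \<noteq> b" "(a, b) \<in> (adj (E1 \<union> E2 - {{a, b}}))\<^sup>*"
    using cycle_to_path[OF simple_graph_Un[OF sg1 sg2]] by blast
  show False
  proof (cases "{a, b} \<in> E1")
    case True
    then show False using glue_half[OF sg1 sg2 int nc1 True ab(2,3)] by blast
  next
    case False
    then have "{a, b} \<in> E2" using ab by auto
    moreover have "E1 \<union> E2 = E2 \<union> E1" by auto
    ultimately show False using glue_half[OF sg2 sg1 _ nc2 _ ab(2)] ab(3) int by auto
  qed
qed


definition pairs :: "'a list \<Rightarrow> ('a \<times> 'a) list" where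
  "pairs w = zip w (tl w)"

definition edg :: "'a \<times> 'a \<Rightarrow> 'a set" where
  "edg p = {fst p, snd p}"

lemma length_pairs[simp]: "length (pairs w) = length w - 1"
  by (simp add: pairs_def)

lemma nth_pairs: "i + 1 < length w \<Longrightarrow> pairs w ! i = (w ! i, w ! (i+1))"
  by (simp add: pairs_def nth_tl)

lemma set_pairs: "set (pairs w) = {(w ! i, w ! (i+1)) | i. i + 1 < length w}"
  unfolding pairs_def set_zip by (auto simp: nth_tl)

lemma wedges_pairs: "wedges w = edg ` set (pairs w)"
  unfolding wedges_def set_pairs edg_def by force

lemma pairs_Cons_Cons[simp]: "pairs (a # b # xs) = (a, b) # pairs (b # xs)"
  by (simp add: pairs_def)

lemma pairs_single[simp]: "pairs [a] = []" and pairs_Nil[simp]: "pairs [] = []"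
  by (simp_all add: pairs_def)

lemma pairs_map: "pairs (map g w) = map (map_prod g g) (pairs w)"
  by (induction w rule: induct_list012) auto

lemma edg_map: "edg (map_prod g g p) = g ` edg p"
  by (cases p) (simp add: edg_def)

lemma wedges_map: "wedges (map g w) = (`) g ` wedges w"
  by (simp add: wedges_pairs pairs_map image_image edg_map)

lemma pairs_in_set: "p \<in> set (pairs w) \<Longrightarrow> fst p \<in> set w \<and> snd p \<in> set w"
  unfolding set_pairs by auto

lemma wedges_sub: "e \<in> wedges w \<Longrightarrow> e \<subseteq> set w"
  unfolding wedges_pairs edg_def using pairs_in_set by fastforce

definition SE :: "'a list \<Rightarrow> 'a set list" where
  "SE w = map edg (pairs w)"



lemma count_list_filter: "count_list xs x = length (filter (\<lambda>y. y = x) xs)"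
  by (induction xs) auto

lemma nmult_SE: "nmult w e = count_list (SE w) e"
proof -
  have "count_list (SE w) e = card {i. i < length (SE w) \<and> SE w ! i = e}"
    by (simp add: count_list_filter length_filter_conv_card)
  also have "\<dots> = card {i. i + 1 < length w \<and> {w ! i, w ! (i + 1)} = e}"
    by (rule arg_cong[where f = card]) (auto simp: SE_def nth_pairs edg_def)
  finally show ?thesis by (simp add: nmult_def)
qed

lemma set_SE: "set (SE w) = wedges w"
  by (simp add: SE_def wedges_pairs)

lemma SE_map: "SE (map g w) = map ((`) g) (SE w)"
  by (simp add: SE_def pairs_map edg_map)

lemma path_idx:
  assumes "\<And>t. m \<le> t \<Longrightarrow> t < k \<Longrightarrow> (w ! t, w ! (t+1)) \<in> R \<or> w ! t = w ! (t+1)"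
    and "m \<le> k"
  shows "(w ! m, w ! k) \<in> R\<^sup>*"
  using assms
proof (induction k)
  case 0 then show ?case by simp
next
  case (Suc k)
  show ?case
  proof (cases "m = Suc k")
    case True then show ?thesis by simp
  next
    case False
    then have "(w ! m, w ! k) \<in> R\<^sup>*" using Suc by auto
    moreover have "(w ! k, w ! Suc k) \<in> R \<or> w ! k = w ! Suc k" using Suc(2)[of k] Suc(3) False by auto
    ultimately show ?thesis by (metis rtrancl.rtrancl_into_rtrancl)
  qed
qed

lemma step_adj:
  assumes "t + 1 < length w" "{w ! t, w ! (t+1)} \<in> E"
  shows "(w ! t, w ! (t+1)) \<in> adj E \<or> w ! t = w ! (t+1)"
  using assms by (auto simp: adj_def)

lemma step_in_wedges: "t + 1 < length w \<Longrightarrow> {w ! t, w ! (t+1)} \<in> wedges w"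
  by (auto simp: wedges_def)

lemma walk_reach: "m \<le> k \<Longrightarrow> k < length w \<Longrightarrow> (w ! m, w ! k) \<in> (adj (wedges w))\<^sup>*"
  by (rule path_idx) (use step_adj[OF _ step_in_wedges] in auto)

lemma walk_conn:
  assumes "w \<noteq> []" shows "connected_graph (set w) (wedges w)"
  unfolding connected_graph_def
proof (intro ballI)
  fix x y assume "x \<in> set w" "y \<in> set w"
  then obtain i j where i: "i < length w" "w ! i = x" and j: "j < length w" "w ! j = y"
    by (auto simp: in_set_conv_nth)
  have "(w ! 0, x) \<in> (adj (wedges w))\<^sup>*" using walk_reach[of 0 i w] i by simp
  moreover have "(w ! 0, y) \<in> (adj (wedges w))\<^sup>*" using walk_reach[of 0 j w] j by simp
  ultimately show "(x, y) \<in> (adj (wedges w))\<^sup>*"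
    by (meson adj_rtrancl_sym rtrancl_trans)
qed

definition noloop :: "'a list \<Rightarrow> bool" where
  "noloop w \<longleftrightarrow> (\<forall>p\<in>set (pairs w). fst p \<noteq> snd p)"

lemma card_doubleton_2: "card {a, b} = 2 \<longleftrightarrow> a \<noteq> b"
  by (cases "a = b") auto

lemma simple_iff: "simple_graph (set w) (wedges w) \<longleftrightarrow> noloop w"
  unfolding simple_graph_def noloop_def wedges_pairs edg_def
  using pairs_in_set by (fastforce simp: card_doubleton_2)

definition treew :: "nat list \<Rightarrow> bool" where
  "treew w \<longleftrightarrow> is_tree (set w) (wedges w)"

lemma tree_iff: "w \<noteq> [] \<Longrightarrow> treew w \<longleftrightarrow> noloop w \<and> \<not> has_cycle (set w) (wedges w)"
  unfolding treew_def is_tree_def using walk_conn simple_iff by auto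

lemma noloop_map: "inj_on g (set w) \<Longrightarrow> noloop (map g w) \<longleftrightarrow> noloop w"
  unfolding noloop_def pairs_map using pairs_in_set
  by (fastforce simp: inj_on_def)

lemma tree_map:
  assumes inj: "inj_on g (set w)" and ne: "w \<noteq> []"
  shows "treew (map g w) \<longleftrightarrow> treew w"
proof -
  have "has_cycle (set (map g w)) (wedges (map g w)) \<longleftrightarrow> has_cycle (set w) (wedges w)"
  proof
    assume "has_cycle (set w) (wedges w)"
    then show "has_cycle (set (map g w)) (wedges (map g w))"
      using has_cycle_image[OF inj] by (simp add: wedges_map)
  next
    assume c: "has_cycle (set (map g w)) (wedges (map g w))"
    define h where "h = inv_into (set w) g"
    have inj2: "inj_on h (g ` set w)" using inj by (simp add: h_def inj_on_inv_into)
    have "has_cycle (h ` g ` set w) ((`) h ` (`) g ` wedges w)"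
      using has_cycle_image[OF inj2] c by (simp add: wedges_map)
    moreover have "h ` g ` set w = set w" using inj by (simp add: h_def)
    moreover have "(`) h ` (`) g ` wedges w = wedges w"
    proof -
      have "h ` g ` e = e" if "e \<in> wedges w" for e
        using wedges_sub[OF that] inj by (simp add: h_def image_image inv_into_f_f subset_iff cong: image_cong)
      then show ?thesis by (force simp: image_image)
    qed
    ultimately show "has_cycle (set w) (wedges w)" by simp
  qed
  then show ?thesis using tree_iff ne noloop_map[OF inj] by (metis Nil_is_map_conv)
qed

lemma tree_sub:
  assumes "treew w" "w \<noteq> []" "v \<noteq> []" "set (pairs v) \<subseteq> set (pairs w)" "set v \<subseteq> set w"
  shows "treew v"
proof -
  have "wedges v \<subseteq> wedges w" using assms(4) by (auto simp: wedges_pairs)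
  then show ?thesis using assms tree_iff has_cycle_mono unfolding noloop_def by (metis subsetD)
qed


section \<open>Parity in tree walks\<close>

lemma nth_in_take: "j < i \<Longrightarrow> j < length w \<Longrightarrow> w ! j \<in> set (take i w)"
  by (auto simp: in_set_conv_nth intro!: exI[of _ j])

lemma noloop_nth: "noloop w \<Longrightarrow> k + 1 < length w \<Longrightarrow> w ! k \<noteq> w ! (k+1)"
proof -
  assume "noloop w" "k + 1 < length w"
  moreover have "(w ! k, w ! (k+1)) \<in> set (pairs w)" using \<open>k + 1 < length w\<close> unfolding set_pairs by blast
  ultimately show ?thesis unfolding noloop_def by fastforce
qed

lemma new_edge_new_vertex:
  assumes tr: "treew w" and k: "k + 1 < length w"
    and new: "\<forall>m<k. {w ! m, w ! (m+1)} \<noteq> {w ! k, w ! (k+1)}"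
  shows "w ! (k+1) \<notin> set (take (k+1) w)"
proof
  assume "w ! (k+1) \<in> set (take (k+1) w)"
  then obtain j where j: "j < k + 1" "w ! j = w ! (k+1)"
    using k by (auto simp: in_set_conv_nth)
  have ne: "w \<noteq> []" using k by auto
  have nl: "noloop w" and nc: "\<not> has_cycle (set w) (wedges w)" using tr tree_iff ne by auto
  define x where "x = w ! k"
  define y where "y = w ! (k+1)"
  have xy: "x \<noteq> y" using noloop_nth[OF nl k] by (simp add: x_def y_def)
  have "(w ! j, w ! k) \<in> (adj (wedges w - {{y, x}}))\<^sup>*"
  proof (rule path_idx)
    fix t assume t: "j \<le> t" "t < k"
    have "{w ! t, w ! (t+1)} \<in> wedges w" using t k by (intro step_in_wedges) simp
    moreover have "{w ! t, w ! (t+1)} \<noteq> {y, x}" using new t by (auto simp: x_def y_def insert_commute)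
    ultimately show "(w ! t, w ! (t+1)) \<in> adj (wedges w - {{y, x}}) \<or> w ! t = w ! (t+1)"
      by (auto simp: adj_def)
  qed (use j in simp)
  then have "(y, x) \<in> (adj (wedges w - {{y, x}}))\<^sup>*" using j by (simp add: x_def y_def)
  moreover have "{y, x} \<in> wedges w" using step_in_wedges[OF k] by (simp add: x_def y_def insert_commute)
  moreover have "simple_graph (set w) (wedges w)" using nl simple_iff by blast
  ultimately have "has_cycle (set w) (wedges w)" using cycle_of_path xy by metis
  then show False using nc by simp
qed

definition fo :: "'a list \<Rightarrow> 'a \<Rightarrow> nat" where
  "fo w x = (LEAST j. j < length w \<and> w ! j = x)"

lemma fo_props:
  assumes "i < length w"
  shows "fo w (w ! i) \<le> i" "fo w (w ! i) < length w" "w ! fo w (w ! i) = w ! i"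
proof -
  have P: "i < length w \<and> w ! i = w ! i" using assms by simp
  show "fo w (w ! i) \<le> i" unfolding fo_def by (rule Least_le) (rule P)
  have "fo w (w ! i) < length w \<and> w ! fo w (w ! i) = w ! i" unfolding fo_def by (rule LeastI) (rule P)
  then show "fo w (w ! i) < length w" "w ! fo w (w ! i) = w ! i" by auto
qed

lemma fo_not_before:
  assumes "i < length w" "j < fo w (w ! i)" shows "w ! j \<noteq> w ! i"
proof
  assume "w ! j = w ! i"
  moreover have "j < length w" using fo_props[OF assms(1)] assms(2) by simp
  ultimately have "fo w (w ! i) \<le> j" unfolding fo_def by (intro Least_le) simp
  then show False using assms(2) by simp
qed

lemma tree_colour:
  assumes tr: "treew w"
  shows "i < length w \<Longrightarrow> even i \<longleftrightarrow> even (fo w (w ! i))"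
proof (induction i rule: less_induct)
  case (less i)
  show ?case
  proof (cases i)
    case 0
    then show ?thesis using fo_props[of 0 w] less.prems by simp
  next
    case (Suc k)
    have k: "k + 1 < length w" using less.prems Suc by simp
    have ne: "w \<noteq> []" using k by auto
    have nl: "noloop w" using tr tree_iff ne by auto
    have xy: "w ! k \<noteq> w ! (k+1)" using noloop_nth[OF nl k] .
    have IHk: "even k \<longleftrightarrow> even (fo w (w ! k))" using less.IH[of k] Suc k by simp
    show ?thesis
    proof (cases "fo w (w ! (k+1)) = k + 1")
      case True then show ?thesis using Suc by simp
    next
      case False
      then have lt: "fo w (w ! (k+1)) < k + 1" using fo_props(1)[OF k] by simp
      have "w ! (k+1) \<in> set (take (k+1) w)"
        using nth_in_take[OF lt, of w] fo_props(2,3)[OF k] by simp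
      then obtain m where m: "m < k" "{w ! m, w ! (m+1)} = {w ! k, w ! (k+1)}"
        using new_edge_new_vertex[OF tr k] by blast
      have IHm: "even m \<longleftrightarrow> even (fo w (w ! m))" using less.IH[of m] m Suc k by simp
      have IHm1: "even (m+1) \<longleftrightarrow> even (fo w (w ! (m+1)))" using less.IH[of "m+1"] m Suc k by simp
      from m(2) xy have "(w ! m = w ! k \<and> w ! (m+1) = w ! (k+1)) \<or> (w ! m = w ! (k+1) \<and> w ! (m+1) = w ! k)"
        by (auto simp: doubleton_eq_iff)
      then show ?thesis
      proof
        assume h: "w ! m = w ! k \<and> w ! (m+1) = w ! (k+1)"
        then show ?thesis using IHk IHm IHm1 Suc by auto
      next
        assume h: "w ! m = w ! (k+1) \<and> w ! (m+1) = w ! k"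
        then show ?thesis using IHk IHm IHm1 Suc by auto
      qed
    qed
  qed
qed

lemma tree_parity:
  assumes "treew w" "i < length w" "j < length w" "w ! i = w ! j"
  shows "even i \<longleftrightarrow> even j"
  using tree_colour[OF assms(1) assms(2)] tree_colour[OF assms(1) assms(3)] assms(4) by simp

lemma tree_edge_parity:
  assumes tr: "treew w" and e: "{y, z} \<in> wedges w" and yz: "y \<noteq> z"
  shows "even (fo w y) \<longleftrightarrow> \<not> even (fo w z)"
proof -
  obtain t where t: "t + 1 < length w" "{y, z} = {w ! t, w ! (t+1)}"
    using e unfolding wedges_def by blast
  have c1: "even t \<longleftrightarrow> even (fo w (w ! t))" using tree_colour[OF tr, of t] t by simp
  have c2: "even (t+1) \<longleftrightarrow> even (fo w (w ! (t+1)))" using tree_colour[OF tr, of "t+1"] t by simp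
  from t(2) yz have "(y = w ! t \<and> z = w ! (t+1)) \<or> (y = w ! (t+1) \<and> z = w ! t)"
    by (auto simp: doubleton_eq_iff)
  then show ?thesis using c1 c2 by auto
qed

lemma relpow_colour:
  assumes tr: "treew w" and h: "w ! 0 = v0" "w \<noteq> []"
  shows "(v0, z) \<in> adj (wedges w) ^^ n \<Longrightarrow> z \<in> set w \<and> (even n \<longleftrightarrow> even (fo w z))"
proof (induction n arbitrary: z)
  case 0
  then have "z = w ! 0" using h by simp
  moreover have "w ! 0 \<in> set w" using h(2) by simp
  ultimately show ?case using fo_props[of 0 w] h by simp
next
  case (Suc n)
  then obtain y where y: "(v0, y) \<in> adj (wedges w) ^^ n" "(y, z) \<in> adj (wedges w)" by auto
  have yz: "{y, z} \<in> wedges w" "y \<noteq> z" using y(2) by (auto simp: adj_def)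
  have "z \<in> set w" using wedges_sub[OF yz(1)] by simp
  moreover have "even (fo w y) \<longleftrightarrow> \<not> even (fo w z)" using tree_edge_parity[OF tr yz] .
  ultimately show ?case using Suc.IH[OF y(1)] by simp
qed

lemma gdist_even:
  assumes tr: "treew w" and h: "w ! 0 = v0" "w \<noteq> []" and i: "i < length w"
  shows "even (gdist (wedges w) v0 (w ! i)) \<longleftrightarrow> even i"
proof -
  have "(w ! 0, w ! i) \<in> (adj (wedges w))\<^sup>*" using walk_reach[of 0 i w] i by simp
  then obtain n where "(v0, w ! i) \<in> adj (wedges w) ^^ n" using h rtrancl_power by metis
  then have "(v0, w ! i) \<in> adj (wedges w) ^^ gdist (wedges w) v0 (w ! i)"
    unfolding gdist_def by (rule LeastI)
  then have "even (gdist (wedges w) v0 (w ! i)) \<longleftrightarrow> even (fo w (w ! i))"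
    using relpow_colour[OF tr h] by blast
  also have "\<dots> \<longleftrightarrow> even i" using tree_colour[OF tr i] by simp
  finally show ?thesis .
qed

definition evs :: "'a list \<Rightarrow> 'a set" where
  "evs xs = {xs ! i | i. i < length xs \<and> even i}"

definition ods :: "'a list \<Rightarrow> 'a set" where
  "ods xs = {xs ! i | i. i < length xs \<and> odd i}"

lemma beta_evs:
  assumes tr: "treew w" and h: "w ! 0 = 1" "w \<noteq> []"
  shows "beta w = card (evs w)"
proof -
  have "{v \<in> wverts w. even (gdist (wedges w) 1 v)} = evs w"
  proof (intro set_eqI iffI)
    fix v assume "v \<in> {v \<in> wverts w. even (gdist (wedges w) 1 v)}"
    then obtain i where "i < length w" "w ! i = v" "even (gdist (wedges w) 1 v)"
      by (auto simp: wverts_def in_set_conv_nth)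
    then show "v \<in> evs w" using gdist_even[OF tr h] unfolding evs_def by blast
  next
    fix v assume "v \<in> evs w"
    then obtain i where "i < length w" "w ! i = v" "even i" unfolding evs_def by blast
    then show "v \<in> {v \<in> wverts w. even (gdist (wedges w) 1 v)}"
      using gdist_even[OF tr h] by (auto simp: wverts_def)
  qed
  then show ?thesis by (simp add: beta_def)
qed

lemma evs_Cons: "evs (x # xs) = insert x (ods xs)"
proof -
  have "evs (x # xs) = {(x # xs) ! i | i. i < Suc (length xs) \<and> even i}" by (simp add: evs_def)
  also have "\<dots> = insert x {xs ! i | i. i < length xs \<and> odd i}"
  proof (intro set_eqI iffI)
    fix v assume "v \<in> {(x # xs) ! i | i. i < Suc (length xs) \<and> even i}"
    then obtain i where i: "i < Suc (length xs)" "even i" "v = (x # xs) ! i" by blast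
    then show "v \<in> insert x {xs ! i | i. i < length xs \<and> odd i}"
      by (cases i) auto
  next
    fix v assume "v \<in> insert x {xs ! i | i. i < length xs \<and> odd i}"
    then show "v \<in> {(x # xs) ! i | i. i < Suc (length xs) \<and> even i}"
    proof
      assume "v = x" then show ?thesis by force
    next
      assume "v \<in> {xs ! i | i. i < length xs \<and> odd i}"
      then obtain i where "i < length xs" "odd i" "v = xs ! i" by blast
      then show ?thesis by (intro CollectI exI[of _ "Suc i"]) auto
    qed
  qed
  finally show ?thesis by (simp add: ods_def)
qed

lemma ods_append: "even (length xs) \<Longrightarrow> ods (xs @ ys) = ods xs \<union> ods ys"
proof (intro set_eqI iffI)
  fix v assume ev: "even (length xs)" and "v \<in> ods (xs @ ys)"
  then obtain i where i: "i < length xs + length ys" "odd i" "v = (xs @ ys) ! i" unfolding ods_def by auto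
  show "v \<in> ods xs \<union> ods ys"
  proof (cases "i < length xs")
    case True then show ?thesis using i by (auto simp: ods_def nth_append)
  next
    case False
    then have "v = ys ! (i - length xs)" "i - length xs < length ys" "odd (i - length xs)"
      using i ev by (auto simp: nth_append)
    then show ?thesis unfolding ods_def by blast
  qed
next
  fix v assume ev: "even (length xs)" and vv: "v \<in> ods xs \<union> ods ys"
  consider "v \<in> ods xs" | "v \<in> ods ys" using vv by blast
  then show "v \<in> ods (xs @ ys)"
  proof cases
    case 1
    then have "v \<in> ods xs" .
    then obtain i where "i < length xs" "odd i" "v = xs ! i" unfolding ods_def by auto
    then show ?thesis unfolding ods_def by (intro CollectI exI[of _ i]) (auto simp: nth_append)
  next
    case 2
    then obtain i where "i < length ys" "odd i" "v = ys ! i" unfolding ods_def by auto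
    then show ?thesis unfolding ods_def using ev
      by (intro CollectI exI[of _ "i + length xs"]) (auto simp: nth_append)
  qed
qed

lemma ods_Nil[simp]: "ods [] = {}" by (simp add: ods_def)

lemma ods_concat: "(\<forall>e\<in>set es. even (length e)) \<Longrightarrow> ods (concat es) = \<Union> (ods ` set es)"
  by (induction es) (auto simp: ods_append)

lemma evs_map: "evs (map g xs) = g ` evs xs"
proof -
  have "evs (map g xs) = {g (xs ! i) | i. i < length xs \<and> even i}" unfolding evs_def by (metis length_map nth_map)
  also have "\<dots> = g ` evs xs" unfolding evs_def by blast
  finally show ?thesis .
qed

lemma evs_sub: "evs xs \<subseteq> set xs"
  unfolding evs_def by auto

lemma ods_sub: "ods xs \<subseteq> set xs"
  unfolding ods_def by auto

section \<open>Canonical relabelling\<close>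

definition cg :: "'a list \<Rightarrow> 'a \<Rightarrow> nat" where
  "cg w x = card (set (takeWhile (\<lambda>y. y \<noteq> x) w)) + 1"

definition canon :: "'a list \<Rightarrow> nat list" where
  "canon w = map (cg w) w"

lemma length_tw_less:
  assumes "x \<in> set w" shows "length (takeWhile (\<lambda>y. y \<noteq> x) w) < length w"
proof (rule ccontr)
  assume "\<not> ?thesis"
  then have "length (takeWhile (\<lambda>y. y \<noteq> x) w) = length w"
    using length_takeWhile_le[of _ w] by (simp add: le_antisym)
  then have "takeWhile (\<lambda>y. y \<noteq> x) w = w" by (metis takeWhile_eq_take take_all_iff order_refl)
  then have "\<forall>y\<in>set w. y \<noteq> x" by (metis set_takeWhileD)
  then show False using assms by blast
qed

lemma cg_inj: "inj_on (cg w) (set w)"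
proof (rule inj_onI)
  fix x y assume x: "x \<in> set w" and y: "y \<in> set w" and eq: "cg w x = cg w y"
  define tx where "tx = takeWhile (\<lambda>z. z \<noteq> x) w"
  define ty where "ty = takeWhile (\<lambda>z. z \<noteq> y) w"
  have lx: "length tx < length w" and ly: "length ty < length w"
    using length_tw_less x y by (auto simp: tx_def ty_def)
  have nx: "w ! length tx = x" using nth_length_takeWhile[of "\<lambda>z. z \<noteq> x" w] lx by (simp add: tx_def)
  have ny: "w ! length ty = y" using nth_length_takeWhile[of "\<lambda>z. z \<noteq> y" w] ly by (simp add: ty_def)
  have tx': "tx = take (length tx) w" by (simp add: tx_def takeWhile_eq_take[symmetric])
  have ty': "ty = take (length ty) w" by (simp add: ty_def takeWhile_eq_take[symmetric])
  have xnot: "x \<notin> set tx" unfolding tx_def by (auto dest: set_takeWhileD)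
  have ynot: "y \<notin> set ty" unfolding ty_def by (auto dest: set_takeWhileD)
  have less: False if lt: "length ta < length tb" and "ta = take (length ta) w" "tb = take (length tb) w"
    and "length tb < length w" and "w ! length ta = a" and "a \<notin> set ta"
    and "card (set ta) = card (set tb)" for ta tb :: "'a list" and a
  proof -
    have "set ta \<subseteq> set tb" using that(2,3) lt by (metis set_take_subset_set_take less_imp_le)
    moreover have "a \<in> set tb" using nth_in_take[OF lt, of w] that by simp
    ultimately have "set ta \<subset> set tb" using that(6) by blast
    then have "card (set ta) < card (set tb)" by (simp add: psubset_card_mono)
    then show False using that(7) by simp
  qed
  have ceq: "card (set tx) = card (set ty)" using eq by (simp add: cg_def tx_def ty_def)
  show "x = y"
  proof (cases "length tx = length ty")
    case True then show ?thesis using nx ny by simp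
  next
    case False
    then have "length tx < length ty \<or> length ty < length tx" by auto
    then show ?thesis
    proof
      assume "length tx < length ty"
      then show ?thesis using less[of tx ty x] tx' ty' ly nx xnot ceq by blast
    next
      assume "length ty < length tx"
      then show ?thesis using less[of ty tx y] tx' ty' lx ny ynot ceq by simp
    qed
  qed
qed

lemma tw_first:
  assumes "i < length w" "w ! i \<notin> set (take i w)"
  shows "takeWhile (\<lambda>y. y \<noteq> w ! i) w = take i w"
proof (rule takeWhile_eq_take_P_nth)
  fix j assume "j < i" "j < length w"
  then show "w ! j \<noteq> w ! i" using assms(2) nth_in_take[of j i w] by auto
qed simp

lemma cg_first:
  assumes "i < length w" "w ! i \<notin> set (take i w)"
  shows "cg w (w ! i) = card (set (take i w)) + 1"
  using tw_first[OF assms] by (simp add: cg_def)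

lemma first_occ:
  assumes "x \<in> set w" shows "\<exists>j < length w. w ! j = x \<and> x \<notin> set (take j w)"
proof -
  define j where "j = length (takeWhile (\<lambda>y. y \<noteq> x) w)"
  have "j < length w" using length_tw_less[OF assms] by (simp add: j_def)
  moreover have "w ! j = x" using nth_length_takeWhile[of "\<lambda>y. y \<noteq> x" w] calculation by (simp add: j_def)
  moreover have "x \<notin> set (take j w)" unfolding j_def
    by (metis set_takeWhileD takeWhile_eq_take)
  ultimately show ?thesis by blast
qed

lemma canon_minimal:
  assumes cw: "closed_walk w"
  shows "minimal_walk (canon w)"
proof -
  have ne: "w \<noteq> []" using cw by (simp add: closed_walk_def)
  have hd1: "cg w (hd w) = 1" using ne by (cases w) (auto simp: cg_def)
  have cl: "closed_walk (canon w)"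
    using cw ne by (auto simp: closed_walk_def canon_def last_map hd_map cg_def)
  have hd: "hd (canon w) = 1" using ne hd1 by (simp add: canon_def hd_map)
  have cond: "canon w ! i \<notin> set (take i (canon w)) \<longrightarrow> canon w ! i = card (set (take i (canon w))) + 1"
    if i: "i < length (canon w)" for i
  proof
    assume nin: "canon w ! i \<notin> set (take i (canon w))"
    have iw: "i < length w" using i by (simp add: canon_def)
    have st: "set (take i (canon w)) = cg w ` set (take i w)" by (simp add: canon_def take_map)
    have ci: "canon w ! i = cg w (w ! i)" using iw by (simp add: canon_def)
    have "w ! i \<notin> set (take i w)" using nin st ci by auto
    then have "cg w (w ! i) = card (set (take i w)) + 1" using cg_first iw by blast
    moreover have "card (cg w ` set (take i w)) = card (set (take i w))"
      using cg_inj by (rule card_image[OF inj_on_subset]) (simp add: set_take_subset)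
    ultimately show "canon w ! i = card (set (take i (canon w))) + 1" using st ci by simp
  qed
  show ?thesis unfolding minimal_walk_def using cl hd cond by blast
qed

lemma cg_map:
  assumes inj: "inj_on h (set w)" and x: "x \<in> set w"
  shows "cg (map h w) (h x) = cg w x"
proof -
  have "takeWhile (\<lambda>y. y \<noteq> h x) (map h w) = map h (takeWhile (\<lambda>y. y \<noteq> x) w)"
  proof -
    have "takeWhile (\<lambda>y. y \<noteq> h x) (map h w) = map h (takeWhile ((\<lambda>y. y \<noteq> h x) \<circ> h) w)"
      by (simp add: takeWhile_map)
    also have "takeWhile ((\<lambda>y. y \<noteq> h x) \<circ> h) w = takeWhile (\<lambda>y. y \<noteq> x) w"
      by (rule takeWhile_cong) (use inj x in \<open>auto simp: inj_on_def\<close>)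
    finally show ?thesis .
  qed
  moreover have "card (h ` set (takeWhile (\<lambda>y. y \<noteq> x) w)) = card (set (takeWhile (\<lambda>y. y \<noteq> x) w))"
    by (rule card_image[OF inj_on_subset[OF inj]]) (meson set_takeWhileD subsetI)
  ultimately show ?thesis by (simp add: cg_def)
qed

lemma canon_map: "inj_on h (set w) \<Longrightarrow> canon (map h w) = canon w"
  by (simp add: canon_def cg_map)

lemma minimal_cg:
  assumes "minimal_walk w" "x \<in> set w" shows "cg w x = x"
proof -
  obtain j where j: "j < length w" "w ! j = x" "x \<notin> set (take j w)" using first_occ[OF assms(2)] by blast
  then have "w ! j = card (set (take j w)) + 1" using assms(1) unfolding minimal_walk_def by blast
  then show ?thesis using cg_first[of j w] j by simp
qed

lemma canon_id: "minimal_walk w \<Longrightarrow> canon w = w"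
  unfolding canon_def by (rule map_idI) (rule minimal_cg)

lemma cg_le:
  assumes x: "x \<in> set w" shows "cg w x \<le> card (set w)"
proof -
  have "set (takeWhile (\<lambda>y. y \<noteq> x) w) \<subset> set w"
    using x by (auto dest: set_takeWhileD)
  then have "card (set (takeWhile (\<lambda>y. y \<noteq> x) w)) < card (set w)" by (simp add: psubset_card_mono)
  then show ?thesis by (simp add: cg_def)
qed

lemma minimal_le: "minimal_walk w \<Longrightarrow> x \<in> set w \<Longrightarrow> x \<le> card (set w)"
  using minimal_cg cg_le by metis

lemma cg_hd: "w \<noteq> [] \<Longrightarrow> cg w (hd w) = 1"
  by (cases w) (auto simp: cg_def)

lemma cg_pos: "cg w x \<ge> 1"
  by (simp add: cg_def)

lemma cg_second:
  assumes "w = a # b # rest" "b \<noteq> a" shows "cg w b = 2"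
  using assms by (simp add: cg_def)

lemma canon_ess:
  assumes "closed_walk w" "treew w"
  shows "essential (canon w)"
proof -
  have ne: "w \<noteq> []" using assms by (simp add: closed_walk_def)
  have "treew (canon w)" unfolding canon_def using tree_map[OF cg_inj ne] assms(2) by simp
  then show ?thesis using canon_minimal[OF assms(1)] by (simp add: essential_def treew_def wverts_def)
qed


section \<open>Excursions\<close>

fun exc :: "nat list \<Rightarrow> nat list list" where
  "exc [] = []"
| "exc (x # xs) = (if x = 1 then [1] # exc xs
     else (case exc xs of [] \<Rightarrow> [[x]] | e # es \<Rightarrow> (x # e) # es))"

definition chunk :: "nat list \<Rightarrow> bool" where
  "chunk e \<longleftrightarrow> e \<noteq> [] \<and> last e = 1 \<and> 1 \<notin> set (butlast e)"

lemma concat_exc: "concat (exc xs) = xs"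
  by (induction xs) (auto split: list.split)

lemma exc_Nil_iff: "exc xs = [] \<longleftrightarrow> xs = []"
proof
  assume "exc xs = []"
  then have "concat (exc xs) = []" by simp
  then show "xs = []" by (simp only: concat_exc)
qed simp

lemma exc_chunks: "xs = [] \<or> last xs = 1 \<Longrightarrow> e \<in> set (exc xs) \<Longrightarrow> chunk e"
proof (induction xs arbitrary: e)
  case Nil then show ?case by simp
next
  case (Cons x xs)
  show ?case
  proof (cases "x = 1")
    case True
    then have "e = [1] \<or> e \<in> set (exc xs)" using Cons.prems(2) by simp
    then show ?thesis
    proof
      assume "e = [1]" then show ?thesis by (simp add: chunk_def)
    next
      assume e: "e \<in> set (exc xs)"
      then have "xs \<noteq> []" by (auto simp: exc_Nil_iff[symmetric])
      then have "last xs = 1" using Cons.prems(1) by simp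
      then show ?thesis using Cons.IH e by blast
    qed
  next
    case False
    then have xs: "xs \<noteq> []" "last xs = 1" using Cons.prems by (auto split: if_splits)
    then obtain e1 es where ex: "exc xs = e1 # es" using exc_Nil_iff by (cases "exc xs") auto
    have c1: "chunk e1" using Cons.IH[of e1] xs ex by simp
    have "e \<in> set ((x # e1) # es)" using Cons.prems(2) False ex by simp
    then consider "e = x # e1" | "e \<in> set es" by auto
    then show ?thesis
    proof cases
      case 1
      then show ?thesis using c1 False by (auto simp: chunk_def)
    next
      case 2
      then show ?thesis using Cons.IH[of e] xs ex by simp
    qed
  qed
qed

lemma exc_chunk_append: "chunk e \<Longrightarrow> exc (e @ ys) = e # exc ys"
proof (induction e)
  case Nil then show ?case by (simp add: chunk_def)
next
  case (Cons x e)
  show ?case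
  proof (cases "e = []")
    case True
    then show ?thesis using Cons.prems by (simp add: chunk_def)
  next
    case False
    then have x1: "x \<noteq> 1" using Cons.prems by (auto simp: chunk_def)
    have "chunk e" using Cons.prems False by (auto simp: chunk_def)
    then show ?thesis using Cons.IH x1 by simp
  qed
qed

lemma exc_concat: "(\<forall>e\<in>set es. chunk e) \<Longrightarrow> exc (concat es) = es"
  by (induction es) (auto simp: exc_chunk_append)

lemma exc_map:
  assumes "\<forall>x\<in>set xs. g x = 1 \<longleftrightarrow> x = 1"
  shows "exc (map g xs) = map (map g) (exc xs)"
  using assms
proof (induction xs)
  case (Cons x xs)
  then show ?case by (auto split: list.split)
qed simp

lemma count_chunk: "chunk e \<Longrightarrow> count_list e 1 = 1"
proof -
  assume c: "chunk e"
  then have "e = butlast e @ [1]" by (metis append_butlast_last_id chunk_def)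
  then have "count_list e 1 = count_list (butlast e) 1 + 1" by (metis count_list_append count_list.simps add.commute add_0 add_Suc plus_1_eq_Suc)
  then show ?thesis using c by (simp add: chunk_def count_list_0_iff)
qed

lemma count_concat_chunks: "(\<forall>e\<in>set es. chunk e) \<Longrightarrow> count_list (concat es) 1 = length es"
proof (induction es)
  case (Cons a es)
  then show ?case using count_chunk[of a] by (simp del: One_nat_def)
qed simp

lemma length_exc: "xs = [] \<or> last xs = 1 \<Longrightarrow> length (exc xs) = count_list xs 1"
  using count_concat_chunks[of "exc xs"] exc_chunks[of xs] concat_exc[of xs] by auto

lemma chunk_form: "chunk e \<Longrightarrow> \<exists>b. e = b @ [1] \<and> 1 \<notin> set b"
  unfolding chunk_def by (metis append_butlast_last_id)

lemma chunk_append1: "1 \<notin> set b \<Longrightarrow> chunk (b @ [1])"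
  by (simp add: chunk_def)

lemma pairs_app: "pairs (a # xs @ ys) = pairs (a # xs) @ pairs (last (a # xs) # ys)"
proof (induction xs arbitrary: a)
  case Nil then show ?case by (cases ys) auto
next
  case (Cons x xs) then show ?case by simp
qed

lemma pairs_concat:
  "(\<forall>e\<in>set es. e \<noteq> [] \<and> last e = 1) \<Longrightarrow> pairs (1 # concat es) = concat (map (\<lambda>e. pairs (1 # e)) es)"
proof (induction es)
  case Nil then show ?case by simp
next
  case (Cons e es)
  then have "pairs (1 # e @ concat es) = pairs (1 # e) @ pairs (1 # concat es)"
    using pairs_app[of 1 e "concat es"] by simp
  then show ?case using Cons by simp
qed

lemma pairs_chunk:
  assumes "b \<noteq> []" shows "pairs (1 # b @ [1]) = (1, hd b) # pairs b @ [(last b, 1)]"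
proof -
  have "pairs (1 # b @ [1]) = pairs (1 # b) @ pairs (last (1 # b) # [1])" by (rule pairs_app)
  moreover have "pairs (1 # b) = (1, hd b) # pairs b" using assms by (cases b) auto
  moreover have "last (1 # b) = last b" using assms by simp
  ultimately show ?thesis by simp
qed

lemma set_concat_1: "set (1 # concat es) = insert 1 (\<Union> (set ` set es))"
  by auto

fun mrg :: "bool list \<Rightarrow> 'a list \<Rightarrow> 'a list \<Rightarrow> 'a list" where
  "mrg [] xs ys = []"
| "mrg (b # bs) xs ys = (if b then hd xs # mrg bs (tl xs) ys else hd ys # mrg bs xs (tl ys))"

lemma mrg_filter:
  assumes "length xs = length (filter id bs)" "length ys = length (filter Not bs)"
    "\<forall>x\<in>set xs. P x" "\<forall>y\<in>set ys. \<not> P y"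
  shows "filter P (mrg bs xs ys) = xs \<and> filter (\<lambda>z. \<not> P z) (mrg bs xs ys) = ys \<and> map P (mrg bs xs ys) = bs"
  using assms
proof (induction bs arbitrary: xs ys)
  case Nil then show ?case by simp
next
  case (Cons b bs)
  show ?case
  proof (cases b)
    case True
    then obtain x xs' where "xs = x # xs'" using Cons.prems(1) by (cases xs) auto
    then show ?thesis using Cons True by auto
  next
    case False
    then obtain y ys' where "ys = y # ys'" using Cons.prems(2) by (cases ys) auto
    then show ?thesis using Cons False by auto
  qed
qed

lemma mrg_map:
  assumes "length xs = length (filter id bs)" "length ys = length (filter Not bs)"
  shows "mrg bs (map F xs) (map F ys) = map F (mrg bs xs ys)"
  using assms
proof (induction bs arbitrary: xs ys)
  case Nil then show ?case by simp
next
  case (Cons b bs)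
  show ?case
  proof (cases b)
    case True
    then obtain x xs' where "xs = x # xs'" using Cons.prems(1) by (cases xs) auto
    then show ?thesis using Cons True by auto
  next
    case False
    then obtain y ys' where "ys = y # ys'" using Cons.prems(2) by (cases ys) auto
    then show ?thesis using Cons False by auto
  qed
qed

lemma mrg_filter_id: "mrg (map P zs) (filter P zs) (filter (\<lambda>z. \<not> P z) zs) = zs"
  by (induction zs) auto

lemma mrg_set:
  assumes "length xs = length (filter id bs)" "length ys = length (filter Not bs)"
  shows "set (mrg bs xs ys) = set xs \<union> set ys"
  using assms
proof (induction bs arbitrary: xs ys)
  case Nil then show ?case by simp
next
  case (Cons b bs)
  show ?case
  proof (cases b)
    case True
    then obtain x xs' where "xs = x # xs'" using Cons.prems(1) by (cases xs) auto
    then show ?thesis using Cons True by auto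
  next
    case False
    then obtain y ys' where "ys = y # ys'" using Cons.prems(2) by (cases ys) auto
    then show ?thesis using Cons False by auto
  qed
qed

lemma mrg_length: "length (mrg bs xs ys) = length bs"
  by (induction bs arbitrary: xs ys) auto

lemma mrg_hd: "bs \<noteq> [] \<Longrightarrow> hd bs \<Longrightarrow> hd (mrg bs xs ys) = hd xs"
  by (cases bs) auto

lemma length_filter_concat_ind:
  assumes "\<forall>e\<in>set es. length (filter P (F e)) = (if Q e then 1 else 0)"
  shows "length (filter P (concat (map F es))) = length (filter Q es)"
  using assms by (induction es) auto

lemma length_filter_concat_ind2:
  assumes "\<forall>e\<in>set es. length (filter P (F e)) + (if Q e then 2 else 0) = (if Q e then length e else 0)"
  shows "length (filter P (concat (map F es))) + 2 * length (filter Q es) = length (concat (filter Q es))"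
  using assms by (induction es) (auto split: if_splits)

lemma count_list_concat_filter:
  "count_list (concat (map F es)) x =
     count_list (concat (map F (filter P es))) x + count_list (concat (map F (filter (\<lambda>e. \<not> P e) es))) x"
  by (induction es) auto

lemma card_idx_filter: "card {i. i < length xs \<and> P (xs ! i)} = length (filter P xs)"
  by (simp add: length_filter_conv_card)


definition chk :: "nat list \<Rightarrow> nat list list" where
  "chk w = exc (tl w)"

definition PA :: "nat list \<Rightarrow> bool" where
  "PA e \<longleftrightarrow> hd e = 2"

definition Aw :: "nat list \<Rightarrow> nat list" where
  "Aw w = 1 # concat (filter PA (chk w))"

definition Bw :: "nat list \<Rightarrow> nat list" where
  "Bw w = 1 # concat (filter (\<lambda>e. \<not> PA e) (chk w))"

definition R0 :: "nat list \<Rightarrow> (nat \<times> nat) set" where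
  "R0 w = adj (wedges w - {{1, 2}})"

lemma walk_decomp:
  assumes "w \<noteq> []" "hd w = 1" "last w = 1"
  shows "w = 1 # concat (chk w)" "\<forall>e\<in>set (chk w). chunk e"
proof -
  show "w = 1 # concat (chk w)" using assms by (cases w) (auto simp: chk_def concat_exc)
  have "tl w = [] \<or> last (tl w) = 1" using assms by (cases w) (auto split: if_splits)
  then show "\<forall>e\<in>set (chk w). chunk e" using exc_chunks by (auto simp: chk_def)
qed

lemma even_chunks:
  assumes "\<forall>i<length (1 # concat es). (1 # concat es) ! i = 1 \<longrightarrow> even i"
    and "\<forall>e\<in>set es. chunk e"
  shows "\<forall>e\<in>set es. even (length e)"
  using assms
proof (induction es)
  case Nil then show ?case by simp
next
  case (Cons e es)
  have ce: "chunk e" using Cons.prems by simp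
  have le: "(1 # e @ concat es) ! length e = 1"
    using ce by (cases e rule: rev_cases) (auto simp: chunk_def nth_append)
  have "length e < length (1 # concat (e # es))" by simp
  then have ev: "even (length e)" using Cons.prems(1) le by auto
  have "\<forall>i<length (1 # concat es). (1 # concat es) ! i = 1 \<longrightarrow> even i"
  proof (intro allI impI)
    fix i assume i: "i < length (1 # concat es)" and v: "(1 # concat es) ! i = 1"
    show "even i"
    proof (cases i)
      case 0 then show ?thesis by simp
    next
      case (Suc j)
      then have "(1 # concat (e # es)) ! (i + length e) = 1"
        using v by (simp add: nth_append)
      moreover have "i + length e < length (1 # concat (e # es))" using i by simp
      ultimately have "even (i + length e)" using Cons.prems(1) by blast
      then show ?thesis using ev by simp
    qed
  qed
  then show ?case using Cons ev by simp
qed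

lemma pairs_chunk_sub:
  assumes "w = 1 # concat es" "\<forall>e\<in>set es. chunk e" "e \<in> set es"
  shows "set (pairs (1 # e)) \<subseteq> set (pairs w)"
proof -
  have "pairs w = concat (map (\<lambda>e. pairs (1 # e)) es)"
    using assms pairs_concat[of es] by (auto simp: chunk_def)
  then show ?thesis using assms(3) by auto
qed

context
  fixes w :: "nat list"
  assumes ess: "essential w" and len3: "3 \<le> length w"
begin

lemma w_basic: "w \<noteq> []" "hd w = 1" "last w = 1" "w ! 0 = 1" "treew w" "noloop w" "minimal_walk w"
proof -
  show ne: "w \<noteq> []" using len3 by auto
  show mw: "minimal_walk w" using ess by (simp add: essential_def)
  show h: "hd w = 1" using mw by (simp add: minimal_walk_def)
  show "last w = 1" using mw h by (simp add: minimal_walk_def closed_walk_def)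
  show "w ! 0 = 1" using h ne by (simp add: hd_conv_nth)
  show tr: "treew w" using ess by (simp add: essential_def treew_def wverts_def)
  show "noloop w" using tr ne tree_iff by blast
qed

lemma w_dec: "w = 1 # concat (chk w)" "\<forall>e\<in>set (chk w). chunk e"
  using walk_decomp w_basic by auto

lemma chk_ne: "chk w \<noteq> []"
proof
  assume "chk w = []"
  then have "w = [1]" using w_dec by simp
  then show False using len3 by simp
qed

lemma ones_even: "i < length w \<Longrightarrow> w ! i = 1 \<Longrightarrow> even i"
  using tree_parity[OF w_basic(5), of i 0] w_basic(4,1) len3 by auto

lemma chunks_even: "e \<in> set (chk w) \<Longrightarrow> even (length e)"
  using even_chunks[of "chk w"] w_dec ones_even by (metis)

lemma chunk_pairs_sub: "e \<in> set (chk w) \<Longrightarrow> set (pairs (1 # e)) \<subseteq> set (pairs w)"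
  using pairs_chunk_sub w_dec by blast

lemma chunk_shape:
  assumes e: "e \<in> set (chk w)"
  obtains b where "e = b @ [1]" "1 \<notin> set b" "b \<noteq> []" "hd b \<noteq> 1" "hd e = hd b"
proof -
  obtain b where b: "e = b @ [1]" "1 \<notin> set b" using chunk_form w_dec(2) e by blast
  have "b \<noteq> []"
  proof
    assume "b = []"
    then have "(1, 1) \<in> set (pairs w)" using chunk_pairs_sub[OF e] b by auto
    then show False using w_basic(6) by (auto simp: noloop_def)
  qed
  moreover have "hd b \<noteq> 1" using b calculation by (cases b) auto
  ultimately show ?thesis using that b by simp
qed

lemma w1_2: "w ! 1 = 2"
proof -
  have nl: "w ! 0 \<noteq> w ! 1" using noloop_nth[OF w_basic(6), of 0] len3 by simp
  have "take 1 w = [1]" using w_basic by (cases w) auto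
  then have "w ! 1 \<notin> set (take 1 w)" using nl w_basic(4) by simp
  then have "w ! 1 = card (set (take 1 w)) + 1" using w_basic(7) len3 unfolding minimal_walk_def by auto
  then show ?thesis using \<open>take 1 w = [1]\<close> by simp
qed

lemma hd_chk: "hd (hd (chk w)) = 2"
proof -
  obtain e es where ee: "chk w = e # es" using chk_ne by (cases "chk w") auto
  then have "e \<noteq> []" using w_dec(2) by (auto simp: chunk_def)
  then have "w ! 1 = hd e" using w_dec(1) ee by (cases e) auto
  then show ?thesis using w1_2 ee by simp
qed

lemma edge12: "{1, 2} \<in> wedges w"
  using step_in_wedges[of 0 w] len3 w_basic(4) w1_2 by simp

lemma not_reach21: "(2, 1) \<notin> (R0 w)\<^sup>*"
proof
  assume "(2, 1) \<in> (R0 w)\<^sup>*"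
  then have "(2, 1) \<in> (adj (wedges w - {{2, 1}}))\<^sup>*" by (simp add: R0_def insert_commute)
  moreover have "{2, 1} \<in> wedges w" using edge12 by (simp add: insert_commute)
  moreover have "simple_graph (set w) (wedges w)" using w_basic(6) simple_iff by blast
  ultimately have "has_cycle (set w) (wedges w)" using cycle_of_path[of "set w" "wedges w" 2 1] by simp
  then show False using w_basic(5,1) tree_iff by blast
qed

lemma R0_sym: "(x, y) \<in> (R0 w)\<^sup>* \<Longrightarrow> (y, x) \<in> (R0 w)\<^sup>*"
  unfolding R0_def by (rule adj_rtrancl_sym)

lemma chunk_reach:
  assumes e: "e \<in> set (chk w)" "e = b @ [1]" "1 \<notin> set b" "b \<noteq> []" and v: "v \<in> set b"
  shows "(hd b, v) \<in> (R0 w)\<^sup>*"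
proof -
  have pb: "set (pairs b) \<subseteq> set (pairs w)"
  proof -
    have "pairs (1 # b @ [1]) = (1, hd b) # pairs b @ [(last b, 1)]" using pairs_chunk e(4) by blast
    then show ?thesis using chunk_pairs_sub[OF e(1)] e(2) by auto
  qed
  have "wedges b \<subseteq> wedges w - {{1, 2}}"
  proof
    fix x assume "x \<in> wedges b"
    then have "x \<in> wedges w" "x \<subseteq> set b" using pb wedges_sub[of x b] by (auto simp: wedges_pairs)
    then show "x \<in> wedges w - {{1, 2}}" using e(3) by auto
  qed
  moreover obtain k where k: "k < length b" "b ! k = v" using v by (auto simp: in_set_conv_nth)
  moreover have "(b ! 0, b ! k) \<in> (adj (wedges b))\<^sup>*" using walk_reach[of 0 k b] k by simp
  ultimately have "(b ! 0, v) \<in> (R0 w)\<^sup>*" unfolding R0_def using adj_rtrancl_mono by metis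
  then show ?thesis using e(4) by (simp add: hd_conv_nth)
qed

lemma chunkA_reach:
  assumes e: "e \<in> set (chk w)" "PA e" and v: "v \<in> set e" "v \<noteq> 1"
  shows "(2, v) \<in> (R0 w)\<^sup>*"
proof -
  obtain b where b: "e = b @ [1]" "1 \<notin> set b" "b \<noteq> []" "hd e = hd b" using chunk_shape[OF e(1)] by metis
  have "v \<in> set b" using v b by auto
  then show ?thesis using chunk_reach[OF e(1) b(1-3)] e(2) b(4) by (simp add: PA_def)
qed

lemma chunkB_reach:
  assumes e: "e \<in> set (chk w)" "\<not> PA e" and v: "v \<in> set e"
  shows "(v, 1) \<in> (R0 w)\<^sup>*"
proof (cases "v = 1")
  case True then show ?thesis by simp
next
  case False
  obtain b where b: "e = b @ [1]" "1 \<notin> set b" "b \<noteq> []" "hd b \<noteq> 1" "hd e = hd b"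
    using chunk_shape[OF e(1)] by metis
  have vb: "v \<in> set b" using v b False by auto
  have "(hd b, v) \<in> (R0 w)\<^sup>*" using chunk_reach[OF e(1) b(1-3) vb] .
  then have 1: "(v, hd b) \<in> (R0 w)\<^sup>*" by (rule R0_sym)
  have "(1, hd b) \<in> set (pairs w)" using chunk_pairs_sub[OF e(1)] b pairs_chunk[of b] by auto
  then have "{1, hd b} \<in> wedges w" by (force simp: wedges_pairs edg_def)
  moreover have "hd b \<noteq> 2" using e(2) b by (simp add: PA_def)
  ultimately have "(hd b, 1) \<in> R0 w" using b(4) by (auto simp: R0_def adj_def insert_commute doubleton_eq_iff)
  then show ?thesis using 1 by (meson rtrancl_into_rtrancl)
qed

lemma chunkA_last:
  assumes e: "e \<in> set (chk w)" "PA e" and b: "e = b @ [1]" "b \<noteq> []" "1 \<notin> set b"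
  shows "last b = 2"
proof (rule ccontr)
  assume l2: "last b \<noteq> 2"
  have lb1: "last b \<in> set b" using b(2) by simp
  have lb: "last b \<in> set b" "last b \<noteq> 1" using lb1 b(3) by metis+
  have "(2, last b) \<in> (R0 w)\<^sup>*" using chunkA_reach[OF e, of "last b"] lb b by auto
  moreover have "(last b, 1) \<in> set (pairs w)" using chunk_pairs_sub[OF e(1)] b pairs_chunk[of b] by auto
  then have "{last b, 1} \<in> wedges w" by (force simp: wedges_pairs edg_def)
  then have "(last b, 1) \<in> R0 w" using l2 lb by (auto simp: R0_def adj_def doubleton_eq_iff)
  ultimately have "(2, 1) \<in> (R0 w)\<^sup>*" by (meson rtrancl_into_rtrancl)
  then show False using not_reach21 by simp
qed

lemma AB_disjoint: "set (Aw w) \<inter> set (Bw w) = {1}"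
proof -
  have "x = 1" if xa: "x \<in> set (Aw w)" and xb: "x \<in> set (Bw w)" for x
  proof (rule ccontr)
    assume x1: "x \<noteq> 1"
    obtain e1 where e1: "e1 \<in> set (chk w)" "PA e1" "x \<in> set e1" using xa x1 by (auto simp: Aw_def)
    obtain e2 where e2: "e2 \<in> set (chk w)" "\<not> PA e2" "x \<in> set e2" using xb x1 by (auto simp: Bw_def)
    have "(2, x) \<in> (R0 w)\<^sup>*" using chunkA_reach[OF e1(1,2) e1(3) x1] .
    moreover have "(x, 1) \<in> (R0 w)\<^sup>*" using chunkB_reach[OF e2] .
    ultimately show False using not_reach21 by (meson rtrancl_trans)
  qed
  then show ?thesis by (auto simp: Aw_def Bw_def)
qed

lemma set_w_AB: "set w = set (Aw w) \<union> set (Bw w)"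
proof -
  have "set w = insert 1 (\<Union> (set ` set (chk w)))" using w_dec(1) by (metis set_concat_1)
  then show ?thesis by (auto simp: Aw_def Bw_def)
qed

lemma pairs_AB:
  "pairs (Aw w) = concat (map (\<lambda>e. pairs (1 # e)) (filter PA (chk w)))"
  "pairs (Bw w) = concat (map (\<lambda>e. pairs (1 # e)) (filter (\<lambda>e. \<not> PA e) (chk w)))"
  "pairs w = concat (map (\<lambda>e. pairs (1 # e)) (chk w))"
proof -
  have c: "\<forall>e\<in>set (chk w). e \<noteq> [] \<and> last e = 1" using w_dec(2) by (auto simp: chunk_def)
  show "pairs (Aw w) = concat (map (\<lambda>e. pairs (1 # e)) (filter PA (chk w)))"
    unfolding Aw_def by (rule pairs_concat) (use c in auto)
  show "pairs (Bw w) = concat (map (\<lambda>e. pairs (1 # e)) (filter (\<lambda>e. \<not> PA e) (chk w)))"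
    unfolding Bw_def by (rule pairs_concat) (use c in auto)
  show "pairs w = concat (map (\<lambda>e. pairs (1 # e)) (chk w))"
    by (subst w_dec(1)) (rule pairs_concat, use c in auto)
qed

lemma tree_AB: "treew (Aw w)" "treew (Bw w)"
proof -
  have "set (pairs (Aw w)) \<subseteq> set (pairs w)" using pairs_AB by auto
  moreover have "set (Aw w) \<subseteq> set w" using set_w_AB by auto
  ultimately show "treew (Aw w)" using tree_sub[OF w_basic(5,1)] by (simp add: Aw_def)
  have "set (pairs (Bw w)) \<subseteq> set (pairs w)" using pairs_AB by auto
  moreover have "set (Bw w) \<subseteq> set w" using set_w_AB by auto
  ultimately show "treew (Bw w)" using tree_sub[OF w_basic(5,1)] by (simp add: Bw_def)
qed

lemma chk_AB: "chk (Aw w) = filter PA (chk w)" "chk (Bw w) = filter (\<lambda>e. \<not> PA e) (chk w)"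
  using exc_concat w_dec(2) by (auto simp: chk_def Aw_def Bw_def)

end


lemma root_count:
  assumes "w \<noteq> []" "hd w = 1" "last w = 1"
  shows "card {i. i < length w - 1 \<and> w ! i = 1} = length (chk w)"
proof -
  have "card {i. i < length w - 1 \<and> w ! i = 1} = card {i. i < length (butlast w) \<and> butlast w ! i = 1}"
    by (rule arg_cong[where f = card]) (auto simp: nth_butlast)
  also have "\<dots> = length (filter (\<lambda>y. y = 1) (butlast w))" by (rule card_idx_filter)
  also have "\<dots> = count_list (butlast w) 1" by (simp add: count_list_filter)
  finally have c1: "card {i. i < length w - 1 \<and> w ! i = 1} = count_list (butlast w) 1" .
  have "w = butlast w @ [1]" using assms by (metis append_butlast_last_id)
  then have "count_list w 1 = count_list (butlast w) 1 + 1"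
    by (metis count_list_append count_list.simps(1) count_list.simps(2) add_0 add.commute add_Suc plus_1_eq_Suc)
  moreover have "count_list w 1 = 1 + count_list (tl w) 1" using assms by (cases w) auto
  moreover have "count_list (tl w) 1 = length (chk w)"
  proof -
    have "tl w = [] \<or> last (tl w) = 1" using assms by (cases w) (auto split: if_splits)
    then show ?thesis using length_exc by (simp add: chk_def)
  qed
  ultimately show ?thesis using c1 by simp
qed

definition th :: "real \<Rightarrow> real \<Rightarrow> real \<Rightarrow> (nat \<Rightarrow> real) \<Rightarrow> nat list \<Rightarrow> real" where
  "th a b p X w = a ^ card (evs w) * b ^ (card (set w) - card (evs w)) *
     (\<Prod>e\<in>set (SE w). p * X (count_list (SE w) e))"

lemma theta_th:
  assumes "treew w" "w \<noteq> []" "w ! 0 = 1"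
  shows "theta1 \<alpha> p X w = th \<alpha> (1 - \<alpha>) p X w" "theta2 \<alpha> p X w = th (1 - \<alpha>) \<alpha> p X w"
  unfolding theta1_def theta2_def th_def beta_evs[OF assms(1,3,2)] wverts_def set_SE nmult_SE by simp_all

lemma inj_image_sets:
  assumes "inj_on g V" shows "inj_on ((`) g) {e. e \<subseteq> V}"
  using assms by (auto simp: inj_on_def inj_on_image_eq_iff)

lemma th_map:
  assumes inj: "inj_on g (set w)"
  shows "th a b p X (map g w) = th a b p X w"
proof -
  have ev: "card (evs (map g w)) = card (evs w)"
    using card_image[OF inj_on_subset[OF inj evs_sub[of w]]] by (simp add: evs_map)
  have st: "card (set (map g w)) = card (set w)" using inj by (simp add: card_image)
  have "set (SE w) \<subseteq> {e. e \<subseteq> set w}" using wedges_sub by (auto simp: set_SE)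
  then have inj2: "inj_on ((`) g) (set (SE w))"
    using inj_image_sets[OF inj] by (rule inj_on_subset[rotated])
  have "(\<Prod>e\<in>set (SE (map g w)). p * X (count_list (SE (map g w)) e)) =
        (\<Prod>e\<in>(`) g ` set (SE w). p * X (count_list (map ((`) g) (SE w)) e))"
    by (simp add: SE_map)
  also have "\<dots> = (\<Prod>e\<in>set (SE w). p * X (count_list (map ((`) g) (SE w)) (g ` e)))"
    using inj2 by (simp add: prod.reindex)
  also have "\<dots> = (\<Prod>e\<in>set (SE w). p * X (count_list (SE w) e))"
    using inj2 by (intro prod.cong refl) (simp add: count_list_inj_map)
  finally show ?thesis using ev st by (simp add: th_def)
qed

lemma length_concat_filter:
  "length (concat (filter P es)) + length (concat (filter (\<lambda>e. \<not> P e) es)) = length (concat es)"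
  by (induction es) auto

lemma evs_concat1:
  "(\<forall>e\<in>set es. even (length e)) \<Longrightarrow> evs (1 # concat es) = insert 1 (\<Union> (ods ` set es))"
  by (simp add: evs_Cons ods_concat)

context
  fixes w :: "nat list"
  assumes ess: "essential w" and len3: "3 \<le> length w"
begin

lemma cF_count:
  "card {i. i < length w - 1 \<and> w ! i = 1 \<and> w ! (i+1) = 2} = length (filter PA (chk w))"
proof -
  have "card {i. i < length w - 1 \<and> w ! i = 1 \<and> w ! (i+1) = 2} =
        card {i. i < length (pairs w) \<and> pairs w ! i = (1, 2)}"
    by (rule arg_cong[where f = card]) (auto simp: nth_pairs)
  also have "\<dots> = length (filter (\<lambda>p. p = (1, 2)) (pairs w))" by (rule card_idx_filter)
  also have "\<dots> = length (filter PA (chk w))"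
    unfolding pairs_AB(3)[OF ess len3]
  proof (rule length_filter_concat_ind, intro ballI)
    fix e assume e: "e \<in> set (chk w)"
    obtain b where b: "e = b @ [1]" "1 \<notin> set b" "b \<noteq> []" "hd b \<noteq> 1" "hd e = hd b"
      using chunk_shape[OF ess len3 e] by metis
    have pe: "pairs (1 # e) = (1, hd b) # pairs b @ [(last b, 1)]" using pairs_chunk[OF b(3)] b(1) by simp
    have np: "\<forall>p\<in>set (pairs b). p \<noteq> (1, 2)" using pairs_in_set b(2) by fastforce
    have "last b \<noteq> 1" using b(2,3) last_in_set by metis
    then have "filter (\<lambda>p. p = (1, 2)) (pairs (1 # e)) = (if hd b = 2 then [(1, 2)] else [])"
      using np pe by (auto simp: filter_empty_conv)
    then show "length (filter (\<lambda>p. p = (1, 2)) (pairs (1 # e))) = (if PA e then 1 else 0)"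
      using b(5) by (simp add: PA_def)
  qed
  finally show ?thesis .
qed

lemma cG_count:
  "card {i. i < length w - 1 \<and> {w ! i, w ! (i+1)} \<in> G2edges w} + 2 * length (filter PA (chk w))
     = length (Aw w) - 1"
proof -
  have "card {i. i < length w - 1 \<and> {w ! i, w ! (i+1)} \<in> G2edges w} =
        card {i. i < length (pairs w) \<and> edg (pairs w ! i) \<in> G2edges w}"
    by (rule arg_cong[where f = card]) (auto simp: nth_pairs edg_def)
  also have "\<dots> = length (filter (\<lambda>p. edg p \<in> G2edges w) (pairs w))" by (rule card_idx_filter)
  finally have c: "card {i. i < length w - 1 \<and> {w ! i, w ! (i+1)} \<in> G2edges w} =
      length (filter (\<lambda>p. edg p \<in> G2edges w) (pairs w))" .
  have G2: "G2edges w = {e \<in> wedges w - {{1, 2}}. \<forall>x\<in>e. (2, x) \<in> (R0 w)\<^sup>*}"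
    by (simp add: G2edges_def R0_def)
  have "length (filter (\<lambda>p. edg p \<in> G2edges w) (concat (map (\<lambda>e. pairs (1 # e)) (chk w))))
        + 2 * length (filter PA (chk w)) = length (concat (filter PA (chk w)))"
  proof (rule length_filter_concat_ind2, intro ballI)
    fix e assume e: "e \<in> set (chk w)"
    obtain b where b: "e = b @ [1]" "1 \<notin> set b" "b \<noteq> []" "hd b \<noteq> 1" "hd e = hd b"
      using chunk_shape[OF ess len3 e] by metis
    have pe: "pairs (1 # e) = (1, hd b) # pairs b @ [(last b, 1)]" using pairs_chunk[OF b(3)] b(1) by simp
    have psub: "set (pairs (1 # e)) \<subseteq> set (pairs w)" using chunk_pairs_sub[OF ess len3 e] .
    show "length (filter (\<lambda>p. edg p \<in> G2edges w) (pairs (1 # e))) + (if PA e then 2 else 0) =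
          (if PA e then length e else 0)"
    proof (cases "PA e")
      case True
      have hb: "hd b = 2" using True b(5) by (simp add: PA_def)
      have lb: "last b = 2" using chunkA_last[OF ess len3 e True b(1,3,2)] .
      have n12: "{1, 2} \<notin> G2edges w" using G2 by auto
      have inb: "edg p \<in> G2edges w" if p: "p \<in> set (pairs b)" for p
      proof -
        have pw: "p \<in> set (pairs w)" using p psub pe by auto
        have sb: "fst p \<in> set b" "snd p \<in> set b" using pairs_in_set[OF p] by auto
        have "edg p \<in> wedges w" using pw by (simp add: wedges_pairs)
        moreover have "edg p \<noteq> {1, 2}"
        proof
          assume "edg p = {1, 2}"
          then have "1 \<in> edg p" by simp
          then have "fst p = 1 \<or> snd p = 1" by (auto simp: edg_def)
          then show False using sb b(2) by metis
        qed
        moreover have "\<forall>x\<in>edg p. (2, x) \<in> (R0 w)\<^sup>*"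
        proof
          fix x assume "x \<in> edg p"
          then have "x \<in> set b" using sb by (auto simp: edg_def)
          then show "(2, x) \<in> (R0 w)\<^sup>*" using chunkA_reach[OF ess len3 e True, of x] b by auto
        qed
        ultimately show ?thesis using G2 by simp
      qed
      have "filter (\<lambda>p. edg p \<in> G2edges w) (pairs (1 # e)) = pairs b"
        using pe hb lb n12 inb by (auto simp: edg_def insert_commute)
      then show ?thesis using True b(1,3) by simp
    next
      case False
      have "\<forall>p\<in>set (pairs (1 # e)). edg p \<notin> G2edges w"
      proof
        fix p assume p: "p \<in> set (pairs (1 # e))"
        have "fst p \<in> set (1 # e)" using pairs_in_set[OF p] by simp
        then have r1: "(fst p, 1) \<in> (R0 w)\<^sup>*"
          using chunkB_reach[OF ess len3 e False, of "fst p"] by auto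
        show "edg p \<notin> G2edges w"
        proof
          assume "edg p \<in> G2edges w"
          then have "(2, fst p) \<in> (R0 w)\<^sup>*" using G2 by (auto simp: edg_def)
          then show False using r1 not_reach21[OF ess len3] by (meson rtrancl_trans)
        qed
      qed
      then have "filter (\<lambda>p. edg p \<in> G2edges w) (pairs (1 # e)) = []" by (simp add: filter_empty_conv)
      then show ?thesis using False by simp
    qed
  qed
  then show ?thesis using c pairs_AB(3)[OF ess len3] by (simp add: Aw_def)
qed

lemma length_AB: "length w + 1 = length (Aw w) + length (Bw w)"
proof -
  have "length w = 1 + length (concat (chk w))" using w_dec(1)[OF ess len3] by (metis length_Cons plus_1_eq_Suc)
  then show ?thesis using length_concat_filter[of PA "chk w"] by (simp add: Aw_def Bw_def)
qed

lemma rootedges_A: "{e \<in> wedges (Aw w). 1 \<in> e} = {{1, 2}}"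
proof -
  have "edg p = {1, 2}" if p: "p \<in> set (pairs (Aw w))" "1 \<in> edg p" for p
  proof -
    obtain e where e: "e \<in> set (chk w)" "PA e" "p \<in> set (pairs (1 # e))"
      using p(1) pairs_AB(1)[OF ess len3] by auto
    obtain b where b: "e = b @ [1]" "1 \<notin> set b" "b \<noteq> []" "hd b \<noteq> 1" "hd e = hd b"
      using chunk_shape[OF ess len3 e(1)] by metis
    have hb: "hd b = 2" using e(2) b(5) by (simp add: PA_def)
    have lb: "last b = 2" using chunkA_last[OF ess len3 e(1,2) b(1,3,2)] .
    have pe: "pairs (1 # e) = (1, hd b) # pairs b @ [(last b, 1)]" using pairs_chunk[OF b(3)] b(1) by simp
    have "p \<notin> set (pairs b)"
    proof
      assume pb: "p \<in> set (pairs b)"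
      have "fst p \<in> set b" "snd p \<in> set b" using pairs_in_set[OF pb] by auto
      moreover have "fst p = 1 \<or> snd p = 1" using p(2) by (auto simp: edg_def)
      ultimately show False using b(2) by metis
    qed
    then have "p = (1, 2) \<or> p = (2, 1)" using e(3) pe hb lb by auto
    then show ?thesis by (auto simp: edg_def)
  qed
  moreover have "(1, 2) \<in> set (pairs (Aw w))"
  proof -
    obtain e es where ee: "chk w = e # es" using chk_ne[OF ess len3] by (cases "chk w") auto
    have e: "e \<in> set (chk w)" "PA e" using ee hd_chk[OF ess len3] by (auto simp: PA_def)
    obtain b where b: "e = b @ [1]" "1 \<notin> set b" "b \<noteq> []" "hd b \<noteq> 1" "hd e = hd b"
      using chunk_shape[OF ess len3 e(1)] by metis
    have "(1, hd b) \<in> set (pairs (1 # e))" using pairs_chunk[OF b(3)] b(1) by simp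
    moreover have "hd b = 2" using e(2) b(5) by (simp add: PA_def)
    ultimately show ?thesis using pairs_AB(1)[OF ess len3] e by auto
  qed
  ultimately show ?thesis unfolding wedges_pairs
  proof (intro set_eqI iffI)
    fix x assume h: "\<And>p. p \<in> set (pairs (Aw w)) \<Longrightarrow> 1 \<in> edg p \<Longrightarrow> edg p = {1, 2}"
      and "x \<in> {e \<in> edg ` set (pairs (Aw w)). 1 \<in> e}"
    then obtain p where "p \<in> set (pairs (Aw w))" "x = edg p" "1 \<in> x" by blast
    then show "x \<in> {{1, 2}}" using h by blast
  next
    fix x assume "(1, 2) \<in> set (pairs (Aw w))" "x \<in> {{1, 2::nat}}"
    then show "x \<in> {e \<in> edg ` set (pairs (Aw w)). 1 \<in> e}"
      by (auto simp: edg_def image_iff intro!: bexI[of _ "(1, 2)"])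
  qed
qed

lemma evs_AB: "evs w = evs (Aw w) \<union> evs (Bw w)"
proof -
  have ev: "\<forall>e\<in>set (chk w). even (length e)" using chunks_even[OF ess len3] by blast
  have "evs w = insert 1 (\<Union> (ods ` set (chk w)))"
    using evs_concat1[OF ev] w_dec(1)[OF ess len3] by metis
  moreover have "evs (Aw w) = insert 1 (\<Union> (ods ` set (filter PA (chk w))))"
    unfolding Aw_def by (rule evs_concat1) (use ev in auto)
  moreover have "evs (Bw w) = insert 1 (\<Union> (ods ` set (filter (\<lambda>e. \<not> PA e) (chk w))))"
    unfolding Bw_def by (rule evs_concat1) (use ev in auto)
  ultimately show ?thesis by auto
qed

lemma SE_AB:
  "count_list (SE w) x = count_list (SE (Aw w)) x + count_list (SE (Bw w)) x"
  "set (SE w) = set (SE (Aw w)) \<union> set (SE (Bw w))"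
  "set (SE (Aw w)) \<inter> set (SE (Bw w)) = {}"
proof -
  have s: "SE v = map edg (pairs v)" for v :: "nat list" by (simp add: SE_def)
  show "count_list (SE w) x = count_list (SE (Aw w)) x + count_list (SE (Bw w)) x"
    unfolding s pairs_AB[OF ess len3] map_concat
    using count_list_concat_filter[of "\<lambda>e. map edg (pairs (1 # e))" "chk w" x PA]
    by (simp add: comp_def)
  show "set (SE w) = set (SE (Aw w)) \<union> set (SE (Bw w))"
    unfolding s pairs_AB[OF ess len3] by auto
  show "set (SE (Aw w)) \<inter> set (SE (Bw w)) = {}"
  proof (rule ccontr)
    assume "set (SE (Aw w)) \<inter> set (SE (Bw w)) \<noteq> {}"
    then obtain x where xa: "x \<in> wedges (Aw w)" and xb: "x \<in> wedges (Bw w)" by (auto simp: set_SE)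
    have "x \<subseteq> {1}" using wedges_sub[OF xa] wedges_sub[OF xb] AB_disjoint[OF ess len3] by auto
    moreover obtain p where p: "p \<in> set (pairs (Aw w))" "x = edg p" using xa by (auto simp: wedges_pairs)
    moreover have "noloop (Aw w)" using tree_AB(1)[OF ess len3] tree_iff by (auto simp: Aw_def)
    ultimately show False by (auto simp: noloop_def edg_def)
  qed
qed

lemma th_AB:
  assumes a0: "a \<noteq> 0"
  shows "th a b p X w * a = th a b p X (Aw w) * th a b p X (Bw w)"
proof -
  define VA where "VA = set (Aw w)"
  define VB where "VB = set (Bw w)"
  define EA where "EA = evs (Aw w)"
  define EB where "EB = evs (Bw w)"
  have fin: "finite VA" "finite VB" "finite EA" "finite EB"
    using evs_sub by (auto simp: VA_def VB_def EA_def EB_def intro: finite_subset)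
  have sub: "EA \<subseteq> VA" "EB \<subseteq> VB" using evs_sub[of "Aw w"] evs_sub[of "Bw w"] by (auto simp: VA_def VB_def EA_def EB_def)
  have one: "1 \<in> EA" "1 \<in> EB" by (auto simp: EA_def EB_def Aw_def Bw_def evs_Cons)
  have int: "VA \<inter> VB = {1}" using AB_disjoint[OF ess len3] by (simp add: VA_def VB_def)
  then have intE: "EA \<inter> EB = {1}" using sub one by auto
  have cV: "card (set w) + 1 = card VA + card VB"
    using card_Un_Int[OF fin(1,2)] int set_w_AB[OF ess len3] by (simp add: VA_def VB_def)
  have cE: "card (evs w) + 1 = card EA + card EB"
    using card_Un_Int[OF fin(3,4)] intE evs_AB by (simp add: EA_def EB_def)
  have eA: "card EA \<ge> 1" "card EA \<le> card VA" using one fin sub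
    by (auto simp: card_mono Suc_le_eq card_gt_0_iff)
  have eB: "card EB \<ge> 1" "card EB \<le> card VB" using one fin sub
    by (auto simp: card_mono Suc_le_eq card_gt_0_iff)
  have pw1: "a ^ card (evs w) * a = a ^ card EA * a ^ card EB"
  proof -
    have "a ^ card (evs w) * a = a ^ (card (evs w) + 1)" by simp
    also have "\<dots> = a ^ card EA * a ^ card EB" using cE by (simp add: power_add[symmetric])
    finally show ?thesis .
  qed
  have pw2: "card (set w) - card (evs w) = (card VA - card EA) + (card VB - card EB)"
    using cV cE eA eB by linarith
  define f where "f e = p * X e" for e
  define SA where "SA = set (SE (Aw w))"
  define SB where "SB = set (SE (Bw w))"
  have finS: "finite SA" "finite SB" by (auto simp: SA_def SB_def)
  have "(\<Prod>e\<in>set (SE w). f (count_list (SE w) e)) =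
        (\<Prod>e\<in>SA \<union> SB. f (count_list (SE (Aw w)) e + count_list (SE (Bw w)) e))"
    using SE_AB by (simp add: SA_def SB_def)
  also have "\<dots> = (\<Prod>e\<in>SA. f (count_list (SE (Aw w)) e + count_list (SE (Bw w)) e)) *
                  (\<Prod>e\<in>SB. f (count_list (SE (Aw w)) e + count_list (SE (Bw w)) e))"
    using SE_AB(3) finS by (simp add: SA_def SB_def prod.union_disjoint)
  also have "(\<Prod>e\<in>SA. f (count_list (SE (Aw w)) e + count_list (SE (Bw w)) e)) =
             (\<Prod>e\<in>SA. f (count_list (SE (Aw w)) e))"
  proof (intro prod.cong refl)
    fix x assume "x \<in> SA"
    then have "x \<notin> set (SE (Bw w))" using SE_AB(3) by (auto simp: SA_def)
    then have "count_list (SE (Bw w)) x = 0" by (simp add: count_list_0_iff)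
    then show "f (count_list (SE (Aw w)) x + count_list (SE (Bw w)) x) = f (count_list (SE (Aw w)) x)" by simp
  qed
  also have "(\<Prod>e\<in>SB. f (count_list (SE (Aw w)) e + count_list (SE (Bw w)) e)) =
             (\<Prod>e\<in>SB. f (count_list (SE (Bw w)) e))"
  proof (intro prod.cong refl)
    fix x assume "x \<in> SB"
    then have "x \<notin> set (SE (Aw w))" using SE_AB(3) by (auto simp: SB_def)
    then have "count_list (SE (Aw w)) x = 0" by (simp add: count_list_0_iff)
    then show "f (count_list (SE (Aw w)) x + count_list (SE (Bw w)) x) = f (count_list (SE (Bw w)) x)" by simp
  qed
  finally have pr: "(\<Prod>e\<in>set (SE w). f (count_list (SE w) e)) =
      (\<Prod>e\<in>SA. f (count_list (SE (Aw w)) e)) * (\<Prod>e\<in>SB. f (count_list (SE (Bw w)) e))" .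
  show ?thesis unfolding th_def
    using pr pw1 pw2 by (simp add: f_def SA_def SB_def EA_def EB_def VA_def VB_def power_add algebra_simps)
qed

end


lemma last_concat1: "(\<forall>e\<in>set es. chunk e) \<Longrightarrow> last (1 # concat es) = 1"
proof (induction es)
  case Nil then show ?case by simp
next
  case (Cons e es)
  have ce: "e \<noteq> []" "last e = 1" using Cons.prems by (auto simp: chunk_def)
  show ?case
  proof (cases "concat es = []")
    case True
    then have "1 # concat (e # es) = 1 # e" by simp
    then have "last (1 # concat (e # es)) = last (1 # e)" by (rule arg_cong)
    also have "\<dots> = last e" by (rule last_ConsR[OF ce(1)])
    finally show ?thesis using ce(2) by simp
  next
    case False
    have ne: "e @ concat es \<noteq> []" using ce(1) by simp
    have "last (1 # concat (e # es)) = last (1 # (e @ concat es))" by (simp only: concat.simps)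
    also have "\<dots> = last (e @ concat es)" by (rule last_ConsR[OF ne])
    also have "\<dots> = last (concat es)" using False by (rule last_appendR)
    also have "\<dots> = last (1 # concat es)" by (rule last_ConsR[OF False, symmetric])
    also have "\<dots> = 1" using Cons.IH Cons.prems by simp
    finally show ?thesis .
  qed
qed

lemma cw_concat:
  assumes "\<forall>e\<in>set es. chunk e" "\<forall>x\<in>set (concat es). 0 < x"
  shows "closed_walk (1 # concat es)"
  using assms last_concat1[OF assms(1)] by (auto simp: closed_walk_def)

lemma canon_chk:
  assumes ne: "w \<noteq> []" and h: "hd w = 1"
  shows "chk (canon w) = map (map (cg w)) (chk w)"
proof -
  have g1: "cg w 1 = 1" using cg_hd[OF ne] h by simp
  have "\<forall>x\<in>set (tl w). cg w x = 1 \<longleftrightarrow> x = 1"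
  proof
    fix x assume x: "x \<in> set (tl w)"
    then have xw: "x \<in> set w" by (meson list.set_sel(2) ne)
    have 1: "1 \<in> set w" using ne h by (metis list.set_sel(1))
    show "cg w x = 1 \<longleftrightarrow> x = 1"
    proof
      assume "cg w x = 1"
      then have "cg w x = cg w 1" using g1 by simp
      then show "x = 1" using inj_onD[OF cg_inj _ xw 1] by blast
    qed (use g1 in simp)
  qed
  then show ?thesis unfolding chk_def canon_def using exc_map by (simp add: map_tl[symmetric])
qed

lemma ess_basic:
  assumes "essential w"
  shows "w \<noteq> []" "hd w = 1" "last w = 1" "w ! 0 = 1" "treew w" "closed_walk w" "minimal_walk w"
proof -
  show mw: "minimal_walk w" using assms by (simp add: essential_def)
  show cw: "closed_walk w" using mw by (simp add: minimal_walk_def)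
  show ne: "w \<noteq> []" using cw by (simp add: closed_walk_def)
  show h: "hd w = 1" using mw by (simp add: minimal_walk_def)
  show "last w = 1" using cw h by (simp add: closed_walk_def)
  show "w ! 0 = 1" using h ne by (simp add: hd_conv_nth)
  show "treew w" using assms by (simp add: essential_def treew_def wverts_def)
qed

lemma canon_basic:
  assumes "w \<noteq> []" "hd w = 1"
  shows "canon w ! 0 = 1" "canon w \<noteq> []" "length (canon w) = length w"
proof -
  have "canon w ! 0 = cg w (w ! 0)" using assms by (simp add: canon_def)
  also have "w ! 0 = hd w" using assms(1) by (simp add: hd_conv_nth)
  finally show "canon w ! 0 = 1" using cg_hd[OF assms(1)] assms(2) by simp
  show "canon w \<noteq> []" "length (canon w) = length w" using assms by (auto simp: canon_def)
qed

definition Psi :: "nat list \<Rightarrow> nat list \<times> nat list \<times> nat set" where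
  "Psi w = (canon (Aw w), canon (Bw w), {k. 1 \<le> k \<and> k < length (chk w) \<and> PA (chk w ! k)})"

definition Tset :: "nat \<Rightarrow> nat \<Rightarrow> nat \<Rightarrow> nat \<Rightarrow> (nat list \<times> nat list \<times> nat set) set" where
  "Tset l r u f = Lam2 (f + u) f \<times> Lam (l - u - f) (r - f) \<times> {S. S \<subseteq> {1..<r} \<and> card S = f - 1}"

context
  fixes w :: "nat list"
  assumes ess: "essential w" and len3: "3 \<le> length w"
begin

lemma AB_closed: "closed_walk (Aw w)" "closed_walk (Bw w)"
proof -
  have pos: "\<forall>x\<in>set w. 0 < x" using ess_basic(6)[OF ess] by (simp add: closed_walk_def)
  have ch: "\<forall>e\<in>set (chk w). chunk e" using w_dec[OF ess len3] by simp
  have sA: "set (Aw w) \<subseteq> set w" and sB: "set (Bw w) \<subseteq> set w" using set_w_AB[OF ess len3] by auto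
  show "closed_walk (Aw w)" unfolding Aw_def
    by (rule cw_concat) (use ch in simp, use sA pos in \<open>auto simp: Aw_def\<close>)
  show "closed_walk (Bw w)" unfolding Bw_def
    by (rule cw_concat) (use ch in simp, use sB pos in \<open>auto simp: Bw_def\<close>)
qed

lemma AB_ess: "essential (canon (Aw w))" "essential (canon (Bw w))"
  using canon_ess AB_closed tree_AB[OF ess len3] by auto

lemma theta_AB:
  assumes a0: "\<alpha> \<noteq> 0" "\<alpha> \<noteq> 1"
  shows "theta1 \<alpha> p X w * \<alpha> = theta1 \<alpha> p X (canon (Aw w)) * theta1 \<alpha> p X (canon (Bw w))"
        "theta2 \<alpha> p X w * (1 - \<alpha>) = theta2 \<alpha> p X (canon (Aw w)) * theta2 \<alpha> p X (canon (Bw w))"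
proof -
  have nA: "Aw w \<noteq> []" "hd (Aw w) = 1" and nB: "Bw w \<noteq> []" "hd (Bw w) = 1" by (auto simp: Aw_def Bw_def)
  have tA: "treew (canon (Aw w))" and tB: "treew (canon (Bw w))"
    using AB_ess by (auto simp: essential_def treew_def wverts_def)
  have cA: "th a b p X (canon (Aw w)) = th a b p X (Aw w)" for a b
    unfolding canon_def by (rule th_map[OF cg_inj])
  have cB: "th a b p X (canon (Bw w)) = th a b p X (Bw w)" for a b
    unfolding canon_def by (rule th_map[OF cg_inj])
  have bw: "treew w" "w \<noteq> []" "w ! 0 = 1" using ess_basic[OF ess] by auto
  show "theta1 \<alpha> p X w * \<alpha> = theta1 \<alpha> p X (canon (Aw w)) * theta1 \<alpha> p X (canon (Bw w))"
    using theta_th(1)[OF bw] theta_th(1)[OF tA canon_basic(2,1)[OF nA]]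
      theta_th(1)[OF tB canon_basic(2,1)[OF nB]] th_AB[OF ess len3 a0(1)] cA cB by simp
  have "1 - \<alpha> \<noteq> 0" using a0 by simp
  then show "theta2 \<alpha> p X w * (1 - \<alpha>) = theta2 \<alpha> p X (canon (Aw w)) * theta2 \<alpha> p X (canon (Bw w))"
    using theta_th(2)[OF bw] theta_th(2)[OF tA canon_basic(2,1)[OF nA]]
      theta_th(2)[OF tB canon_basic(2,1)[OF nB]] th_AB[OF ess len3] cA cB by simp
qed

lemma chk_canon_AB:
  "chk (canon (Aw w)) = map (map (cg (Aw w))) (filter PA (chk w))"
  "chk (canon (Bw w)) = map (map (cg (Bw w))) (filter (\<lambda>e. \<not> PA e) (chk w))"
  using canon_chk[of "Aw w"] canon_chk[of "Bw w"] chk_AB[OF ess len3] by (auto simp: Aw_def Bw_def)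

lemma S_card: "card {k. 1 \<le> k \<and> k < length (chk w) \<and> PA (chk w ! k)} = length (filter PA (chk w)) - 1"
proof -
  have "{k. 1 \<le> k \<and> k < length (chk w) \<and> PA (chk w ! k)} = {k. k < length (chk w) \<and> PA (chk w ! k)} - {0}"
    by auto
  moreover have "0 \<in> {k. k < length (chk w) \<and> PA (chk w ! k)}"
    using chk_ne[OF ess len3] hd_chk[OF ess len3] by (auto simp: PA_def hd_conv_nth)
  moreover have "card {k. k < length (chk w) \<and> PA (chk w ! k)} = length (filter PA (chk w))"
    by (rule card_idx_filter)
  ultimately show ?thesis by (simp add: card_Diff_singleton)
qed

end

lemma Lam1_props:
  assumes "w \<in> Lam1 l r u f"
  shows "essential w" "length w = 2 * l + 1" "0 < l" "3 \<le> length w"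
    "length (chk w) = r" "length (filter PA (chk w)) = f"
    "length (Aw w) = 2 * (f + u) + 1"
proof -
  have w: "essential w" "length w = 2 * l + 1" "card {i. i < 2 * l \<and> w ! i = 1} = r" "0 < l"
    "2 * u = card {i. i < 2 * l \<and> {w ! i, w ! (i + 1)} \<in> G2edges w}"
    "f = card {i. i < 2 * l \<and> w ! i = 1 \<and> w ! (i + 1) = 2}"
    using assms by (auto simp: Lam1_def Lam_def)
  show "essential w" "length w = 2 * l + 1" "0 < l" using w by auto
  show l3: "3 \<le> length w" using w by simp
  have b: "w \<noteq> []" "hd w = 1" "last w = 1" using ess_basic[OF w(1)] by auto
  show "length (chk w) = r" using root_count[OF b] w by simp
  show f: "length (filter PA (chk w)) = f" using cF_count[OF w(1) l3] w by simp
  have "length (Aw w) \<ge> 1" by (simp add: Aw_def)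
  then show "length (Aw w) = 2 * (f + u) + 1" using cG_count[OF w(1) l3] w f by simp
qed

lemma Psi_in_T:
  assumes w: "w \<in> Lam1 l r u f"
  shows "Psi w \<in> Tset l r u f"
proof -
  note L = Lam1_props[OF w]
  have ess: "essential w" and l3: "3 \<le> length w" using L by auto
  have nA: "Aw w \<noteq> []" "hd (Aw w) = 1" and nB: "Bw w \<noteq> []" "hd (Bw w) = 1" by (auto simp: Aw_def Bw_def)
  let ?w1 = "canon (Aw w)" and ?w2 = "canon (Bw w)"
  have lA: "length ?w1 = 2 * (f + u) + 1" using L canon_basic(3)[OF nA] by simp
  have lB: "length ?w2 = 2 * (l - u - f) + 1"
    using L length_AB[OF ess l3] canon_basic(3)[OF nB] by simp
  have e1: "essential ?w1" and e2: "essential ?w2" using AB_ess[OF ess l3] by auto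
  have rc1: "card {i. i < 2 * (f + u) \<and> ?w1 ! i = 1} = f"
  proof -
    have "card {i. i < length ?w1 - 1 \<and> ?w1 ! i = 1} = length (chk ?w1)"
      using root_count ess_basic[OF e1] by simp
    then show ?thesis using lA chk_canon_AB[OF ess l3] L by simp
  qed
  have rc2: "card {i. i < 2 * (l - u - f) \<and> ?w2 ! i = 1} = r - f"
  proof -
    have "card {i. i < length ?w2 - 1 \<and> ?w2 ! i = 1} = length (chk ?w2)"
      using root_count ess_basic[OF e2] by simp
    moreover have "length (filter (\<lambda>e. \<not> PA e) (chk w)) = r - f"
      using L sum_length_filter_compl[of PA "chk w"] by simp
    ultimately show ?thesis using lB chk_canon_AB[OF ess l3] by simp
  qed
  have re: "card {e \<in> wedges ?w1. 1 \<in> e} = 1"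
  proof -
    let ?g = "cg (Aw w)"
    have g1: "\<forall>x\<in>set (Aw w). ?g x = 1 \<longleftrightarrow> x = 1"
    proof
      fix x assume x: "x \<in> set (Aw w)"
      have "1 \<in> set (Aw w)" by (simp add: Aw_def)
      moreover have "?g 1 = 1" using cg_hd[OF nA(1)] nA(2) by simp
      ultimately show "?g x = 1 \<longleftrightarrow> x = 1" using inj_onD[OF cg_inj _ x] by metis
    qed
    have "{e \<in> wedges ?w1. 1 \<in> e} = (`) ?g ` {e \<in> wedges (Aw w). 1 \<in> e}"
    proof -
      have "1 \<in> ?g ` e \<longleftrightarrow> 1 \<in> e" if "e \<in> wedges (Aw w)" for e
        using wedges_sub[OF that] g1 by force
      then show ?thesis unfolding canon_def wedges_map by auto
    qed
    then show ?thesis using rootedges_A[OF ess l3] by simp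
  qed
  have S: "{k. 1 \<le> k \<and> k < length (chk w) \<and> PA (chk w ! k)} \<subseteq> {1..<r}"
    "card {k. 1 \<le> k \<and> k < length (chk w) \<and> PA (chk w ! k)} = f - 1"
    using L S_card[OF ess l3] by auto
  show ?thesis unfolding Psi_def Tset_def Lam2_def Lam_def
    using e1 e2 lA lB rc1 rc2 re S by (auto simp: add.commute)
qed


definition sh :: "nat \<Rightarrow> nat \<Rightarrow> nat" where
  "sh m x = (if x = 1 then 1 else x + m - 1)"

definition bl :: "nat \<Rightarrow> nat set \<Rightarrow> bool list" where
  "bl r S = map (\<lambda>k. k = 0 \<or> k \<in> S) [0..<r]"

definition Mrg :: "nat \<Rightarrow> nat list \<times> nat list \<times> nat set \<Rightarrow> nat list" where
  "Mrg r t = (case t of (w1, w2, S) \<Rightarrow>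
     1 # concat (mrg (bl r S) (chk w1) (chk (map (sh (card (set w1))) w2))))"

definition Phi :: "nat \<Rightarrow> nat list \<times> nat list \<times> nat set \<Rightarrow> nat list" where
  "Phi r t = canon (Mrg r t)"

lemma chk_map:
  assumes "\<forall>x\<in>set (tl w). g x = 1 \<longleftrightarrow> x = 1"
  shows "chk (map g w) = map (map g) (chk w)"
  using exc_map[OF assms] by (simp add: chk_def map_tl[symmetric])

lemma sh_1: "m \<ge> 1 \<Longrightarrow> x \<ge> 1 \<Longrightarrow> sh m x = 1 \<longleftrightarrow> x = 1"
  unfolding sh_def by (cases "x = 1") auto

lemma sh_inj: "m \<ge> 1 \<Longrightarrow> inj_on (sh m) {x. x \<ge> 1}"
  by (auto simp: inj_on_def sh_def split: if_splits)

lemma length_filter_id_map: "length (filter id (map P xs)) = length (filter P xs)"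
  by (induction xs) auto

lemma length_filter_Not_map: "length (filter Not (map P xs)) = length (filter (\<lambda>x. \<not> P x) xs)"
  by (induction xs) auto

lemma ess_pos: "essential w \<Longrightarrow> x \<in> set w \<Longrightarrow> x \<ge> 1"
  using ess_basic(6) by (fastforce simp: closed_walk_def)

lemma set_concat_sub: "e \<in> set es \<Longrightarrow> set e \<subseteq> set (1 # concat es)"
  by auto

section \<open>Phi after Psi\<close>

lemma G_inj:
  assumes iA: "inj_on gA VA" and iB: "inj_on gB VB" and leA: "\<forall>x\<in>VA. gA x \<le> m"
    and posB: "\<forall>x\<in>VB. gB x \<ge> 1" and oneB: "\<forall>x\<in>VB. gB x = 1 \<longleftrightarrow> x = 1"
    and oA: "1 \<in> VA" and int: "VA \<inter> VB \<subseteq> {1}" and m: "m \<ge> 1"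
  shows "inj_on (\<lambda>x. if x \<in> VA then gA x else sh m (gB x)) (VA \<union> VB)"
proof (rule inj_onI)
  fix x y assume x: "x \<in> VA \<union> VB" and y: "y \<in> VA \<union> VB"
    and eq: "(if x \<in> VA then gA x else sh m (gB x)) = (if y \<in> VA then gA y else sh m (gB y))"
  have big: "sh m (gB z) \<ge> m + 1" if "z \<in> VB" "z \<notin> VA" for z
  proof -
    have "z \<noteq> 1" using that oA by auto
    then have "gB z \<noteq> 1" using oneB that by auto
    then have "gB z \<ge> 2" using posB that by fastforce
    then show ?thesis by (simp add: sh_def)
  qed
  show "x = y"
  proof (cases "x \<in> VA")
    case True
    show ?thesis
    proof (cases "y \<in> VA")
      case True
      then show ?thesis using \<open>x \<in> VA\<close> eq iA by (auto dest: inj_onD)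
    next
      case False
      then have "y \<in> VB" using y by auto
      then show ?thesis using big[of y] False eq \<open>x \<in> VA\<close> leA by fastforce
    qed
  next
    case False
    then have xB: "x \<in> VB" using x by auto
    show ?thesis
    proof (cases "y \<in> VA")
      case True
      then show ?thesis using big[of x] False eq xB leA by fastforce
    next
      case False
      then have yB: "y \<in> VB" using y by auto
      have "sh m (gB x) = sh m (gB y)" using eq False \<open>x \<notin> VA\<close> by simp
      then have "gB x = gB y" using sh_inj[OF m] posB xB yB by (auto dest: inj_onD)
      then show ?thesis using iB xB yB by (auto dest: inj_onD)
    qed
  qed
qed

lemma Phi_Psi:
  assumes w: "w \<in> Lam1 l r u f"
  shows "Phi r (Psi w) = w"
proof -
  note L = Lam1_props[OF w]
  have ess: "essential w" and l3: "3 \<le> length w" using L by auto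
  define es where "es = chk w"
  define A where "A = Aw w"
  define B where "B = Bw w"
  define gA where "gA = cg A"
  define gB where "gB = cg B"
  define S where "S = {k. 1 \<le> k \<and> k < length es \<and> PA (es ! k)}"
  define m where "m = card (set (canon A))"
  have nA: "A \<noteq> []" "hd A = 1" and nB: "B \<noteq> []" "hd B = 1" by (auto simp: A_def B_def Aw_def Bw_def)
  have mA: "m = card (set A)" using card_image[OF cg_inj[of A]] by (simp add: m_def canon_def)
  have oA: "1 \<in> set A" by (simp add: A_def Aw_def)
  have m1: "m \<ge> 1" using mA oA by (metis One_nat_def Suc_leI card_gt_0_iff empty_iff finite_set)
  have gA1: "gA 1 = 1" using cg_hd[OF nA(1)] nA(2) by (simp add: gA_def)
  have gB1: "gB 1 = 1" using cg_hd[OF nB(1)] nB(2) by (simp add: gB_def)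
  have oB: "1 \<in> set B" by (simp add: B_def Bw_def)
  have oneB: "\<forall>x\<in>set B. gB x = 1 \<longleftrightarrow> x = 1"
  proof
    fix x assume x: "x \<in> set B"
    show "gB x = 1 \<longleftrightarrow> x = 1"
    proof
      assume "gB x = 1"
      then have "gB x = gB 1" using gB1 by simp
      then show "x = 1" using inj_onD[OF cg_inj _ x oB] by (simp add: gB_def)
    qed (use gB1 in simp)
  qed
  have int: "set A \<inter> set B = {1}" using AB_disjoint[OF ess l3] by (simp add: A_def B_def)
  have sw: "set w = set A \<union> set B" using set_w_AB[OF ess l3] by (simp add: A_def B_def)
  define G where "G x = (if x \<in> set A then gA x else sh m (gB x))" for x
  have Ginj: "inj_on G (set w)"
    unfolding sw G_def
  proof (rule G_inj)
    show "inj_on gA (set A)" "inj_on gB (set B)" by (simp_all add: gA_def gB_def cg_inj)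
    show "\<forall>x\<in>set A. gA x \<le> m" using cg_le[of _ A] mA by (simp add: gA_def)
    show "\<forall>x\<in>set B. gB x \<ge> 1" using cg_pos[of B] by (simp add: gB_def)
  qed (use oneB oA int m1 in auto)
  have chk1: "chk (canon A) = map (map gA) (filter PA es)"
    using chk_canon_AB(1)[OF ess l3] by (simp add: A_def gA_def es_def)
  have chk2: "chk (map (sh m) (canon B)) = map (map (sh m \<circ> gB)) (filter (\<lambda>e. \<not> PA e) es)"
  proof -
    have "\<forall>x\<in>set (tl (canon B)). sh m x = 1 \<longleftrightarrow> x = 1"
    proof
      fix x assume "x \<in> set (tl (canon B))"
      then have "x \<in> set (canon B)" by (meson list.set_sel(2) canon_basic(2)[OF nB])
      then have "x \<ge> 1" by (auto simp: canon_def cg_def)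
      then show "sh m x = 1 \<longleftrightarrow> x = 1" using sh_1[OF m1] by simp
    qed
    then have "chk (map (sh m) (canon B)) = map (map (sh m)) (chk (canon B))" by (rule chk_map)
    then show ?thesis using chk_canon_AB(2)[OF ess l3] by (simp add: B_def gB_def es_def)
  qed
  have bls: "bl r S = map PA es"
  proof (rule nth_equalityI)
    show "length (bl r S) = length (map PA es)" using L by (simp add: bl_def es_def)
    fix k assume k: "k < length (bl r S)"
    then have kr: "k < length es" using L by (simp add: bl_def es_def)
    have p0: "PA (es ! 0)" using chk_ne[OF ess l3] hd_chk[OF ess l3] by (simp add: PA_def es_def hd_conv_nth)
    show "bl r S ! k = map PA es ! k" using k kr p0 by (auto simp: bl_def S_def)
  qed
  have eA: "map (map gA) (filter PA es) = map (map G) (filter PA es)"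
  proof (intro map_cong refl)
    fix e x assume e: "e \<in> set (filter PA es)" and x: "x \<in> set e"
    then have "x \<in> set A" by (auto simp: A_def Aw_def es_def)
    then show "gA x = G x" by (simp add: G_def)
  qed
  have eB: "map (map (sh m \<circ> gB)) (filter (\<lambda>e. \<not> PA e) es) = map (map G) (filter (\<lambda>e. \<not> PA e) es)"
  proof (intro map_cong refl)
    fix e x assume e: "e \<in> set (filter (\<lambda>e. \<not> PA e) es)" and x: "x \<in> set e"
    then have xB: "x \<in> set B" by (auto simp: B_def Bw_def es_def)
    show "(sh m \<circ> gB) x = G x"
    proof (cases "x \<in> set A")
      case True
      then have "x = 1" using xB int by auto
      then show ?thesis using gA1 gB1 by (simp add: G_def sh_def oA)
    next
      case False then show ?thesis by (simp add: G_def)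
    qed
  qed
  have len1: "length (filter PA es) = length (filter id (map PA es))" by (simp add: length_filter_id_map)
  have len2: "length (filter (\<lambda>e. \<not> PA e) es) = length (filter Not (map PA es))"
    by (simp add: length_filter_Not_map comp_def)
  have "Mrg r (Psi w) = 1 # concat (mrg (map PA es) (map (map gA) (filter PA es)) (map (map (sh m \<circ> gB)) (filter (\<lambda>e. \<not> PA e) es)))"
    unfolding Mrg_def Psi_def using chk1 chk2 bls
    by (simp add: A_def B_def es_def m_def S_def del: map_map)
  also have "\<dots> = 1 # concat (mrg (map PA es) (map (map G) (filter PA es)) (map (map G) (filter (\<lambda>e. \<not> PA e) es)))"
    by (simp only: eA eB)
  also have "\<dots> = 1 # concat (map (map G) (mrg (map PA es) (filter PA es) (filter (\<lambda>e. \<not> PA e) es)))"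
    using mrg_map[OF len1 len2, of "map G"] by (simp only:)
  also have "\<dots> = 1 # concat (map (map G) es)" by (simp add: mrg_filter_id)
  also have "\<dots> = map G w"
  proof -
    have g1: "G 1 = 1" using gA1 oA by (simp add: G_def)
    have "w = 1 # concat es" using w_dec(1)[OF ess l3] by (simp add: es_def)
    then have "map G w = map G (1 # concat es)" by (rule arg_cong)
    also have "\<dots> = 1 # concat (map (map G) es)" using g1 by (simp add: map_concat)
    finally show ?thesis by simp
  qed
  finally have "Mrg r (Psi w) = map G w" .
  then show ?thesis unfolding Phi_def using canon_map[OF Ginj] canon_id ess_basic(7)[OF ess] by simp
qed


lemma chunk_map:
  assumes "chunk e" "\<forall>x\<in>set e. g x = 1 \<longleftrightarrow> x = 1"
  shows "chunk (map g e)"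
proof -
  have "e \<noteq> []" "last e = 1" "1 \<notin> set (butlast e)" using assms(1) by (auto simp: chunk_def)
  moreover have "\<forall>x\<in>set (butlast e). g x \<noteq> 1"
    using assms(2) calculation(3) by (metis in_set_butlastD)
  moreover have "g (last e) = 1" using assms(2) calculation(1,2) by (metis last_in_set)
  ultimately show ?thesis using assms(2) by (auto simp: chunk_def last_map map_butlast[symmetric])
qed

lemma card_1_two:
  assumes "card A = 1" "x \<in> A" "y \<in> A" shows "x = y"
  using assms by (metis card_1_singletonE singletonD)

context
  fixes l r u f :: nat and w1 w2 :: "nat list" and S :: "nat set"
    and m :: nat and w2' :: "nat list" and es1 es2 :: "nat list list" and bs :: "bool list"
    and M :: "nat list"
  assumes t: "(w1, w2, S) \<in> Tset l r u f" and f1: "1 \<le> f" and fr: "f \<le> r" and ur: "u + r \<le> l"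
    and m_def: "m = card (set w1)" and w2'_def: "w2' = map (sh m) w2"
    and es1_def: "es1 = chk w1" and es2_def: "es2 = chk w2'" and bs_def: "bs = bl r S"
    and M_def: "M = 1 # concat (mrg bs es1 es2)"
begin

lemma E1: "essential w1" "length w1 = 2 * (f + u) + 1" "length (chk w1) = f"
  "card {e \<in> wedges w1. 1 \<in> e} = 1" "3 \<le> length w1"
proof -
  have h: "essential w1" "length w1 = 2 * (f + u) + 1" "card {i. i < 2 * (f + u) \<and> w1 ! i = 1} = f"
    "card {e \<in> wedges w1. 1 \<in> e} = 1"
    using t by (auto simp: Tset_def Lam2_def Lam_def)
  show "essential w1" "length w1 = 2 * (f + u) + 1" "card {e \<in> wedges w1. 1 \<in> e} = 1" using h by auto
  show "3 \<le> length w1" using h f1 by simp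
  have b: "w1 \<noteq> []" "hd w1 = 1" "last w1 = 1" using ess_basic[OF h(1)] by auto
  show "length (chk w1) = f" using root_count[OF b] h by simp
qed

lemma E2: "essential w2" "length w2 = 2 * (l - u - f) + 1" "length (chk w2) = r - f"
proof -
  have h: "essential w2" "length w2 = 2 * (l - u - f) + 1" "card {i. i < 2 * (l - u - f) \<and> w2 ! i = 1} = r - f"
    using t by (auto simp: Tset_def Lam2_def Lam_def)
  show "essential w2" "length w2 = 2 * (l - u - f) + 1" using h by auto
  have b: "w2 \<noteq> []" "hd w2 = 1" "last w2 = 1" using ess_basic[OF h(1)] by auto
  show "length (chk w2) = r - f" using root_count[OF b] h by simp
qed

lemma E3: "S \<subseteq> {1..<r}" "card S = f - 1"
  using t by (auto simp: Tset_def)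

lemma F1: "\<forall>e\<in>set es1. chunk e \<and> PA e" "es1 \<noteq> []"
proof -
  show "es1 \<noteq> []" using chk_ne[OF E1(1,5)] by (simp add: es1_def)
  show "\<forall>e\<in>set es1. chunk e \<and> PA e"
  proof
    fix e assume e: "e \<in> set es1"
    have ch: "chunk e" using w_dec(2)[OF E1(1,5)] e by (simp add: es1_def)
    obtain b where b: "e = b @ [1]" "1 \<notin> set b" "b \<noteq> []" "hd b \<noteq> 1" "hd e = hd b"
      using chunk_shape[OF E1(1,5)] e es1_def by metis
    have "(1, hd b) \<in> set (pairs (1 # e))" using pairs_chunk[OF b(3)] b(1) by simp
    then have "(1, hd b) \<in> set (pairs w1)" using chunk_pairs_sub[OF E1(1,5)] e es1_def by blast
    then have "{1, hd b} \<in> wedges w1" by (force simp: wedges_pairs edg_def)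
    then have "{1, hd b} \<in> {e \<in> wedges w1. 1 \<in> e}" by simp
    moreover have "{1, 2} \<in> {e \<in> wedges w1. 1 \<in> e}" using edge12[OF E1(1,5)] by simp
    ultimately have "{1, hd b} = {1, 2}" using card_1_two[OF E1(4)] by blast
    then have "hd b = 2" using b(4) by (auto simp: doubleton_eq_iff)
    then show "chunk e \<and> PA e" using ch b(5) by (simp add: PA_def)
  qed
qed

lemma F2: "\<forall>x\<in>set w1. 1 \<le> x \<and> x \<le> m" "2 \<le> m" "1 \<in> set w1" "2 \<in> set w1"
proof -
  show "\<forall>x\<in>set w1. 1 \<le> x \<and> x \<le> m"
    using minimal_le[OF ess_basic(7)[OF E1(1)]] ess_pos[OF E1(1)] m_def by auto
  show o: "1 \<in> set w1" using ess_basic(1,2)[OF E1(1)] by (metis list.set_sel(1))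
  have "1 < length w1" using E1(5) by simp
  then have "w1 ! 1 \<in> set w1" by (rule nth_mem)
  then show t2: "2 \<in> set w1" using w1_2[OF E1(1,5)] by simp
  have "card {1, 2::nat} \<le> card (set w1)" using o t2 by (intro card_mono) auto
  then show "2 \<le> m" using m_def by simp
qed

lemma sh_pos: "\<forall>x\<in>set w2. sh m x = 1 \<longleftrightarrow> x = 1"
  using sh_1 F2(2) ess_pos[OF E2(1)] by auto

lemma sh_inj2: "inj_on (sh m) (set w2)"
  using sh_inj[of m] F2(2) ess_pos[OF E2(1)] by (rule_tac inj_on_subset) auto

lemma F3: "es2 = map (map (sh m)) (chk w2)" "\<forall>e\<in>set es2. chunk e \<and> \<not> PA e" "length es2 = r - f"
proof -
  have ne2: "w2 \<noteq> []" using ess_basic(1)[OF E2(1)] .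
  have "\<forall>x\<in>set (tl w2). sh m x = 1 \<longleftrightarrow> x = 1" using sh_pos by (meson list.set_sel(2) ne2)
  then show e2: "es2 = map (map (sh m)) (chk w2)" using chk_map by (simp add: es2_def w2'_def)
  then show "length es2 = r - f" using E2(3) by simp
  show "\<forall>e\<in>set es2. chunk e \<and> \<not> PA e"
  proof (cases "3 \<le> length w2")
    case False
    then have "length w2 = 1" using E2(2) by simp
    then have "tl w2 = []" by (cases w2) auto
    then show ?thesis using e2 by (simp add: chk_def)
  next
    case True
    show ?thesis
    proof
      fix e assume "e \<in> set es2"
      then obtain e' where e': "e' \<in> set (chk w2)" "e = map (sh m) e'" using e2 by auto
      obtain b where b: "e' = b @ [1]" "1 \<notin> set b" "b \<noteq> []" "hd b \<noteq> 1" "hd e' = hd b"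
        using chunk_shape[OF E2(1) True e'(1)] by metis
      have ch: "chunk e'" using w_dec(2)[OF E2(1) True] e'(1) by simp
      have sw: "set e' \<subseteq> set w2" using e'(1) w_dec(1)[OF E2(1) True] by (metis set_concat_sub)
      have "chunk e" using chunk_map[OF ch] sh_pos sw e'(2) by auto
      moreover have "hd b \<in> set w2" using sw b by auto
      then have "hd b \<ge> 2" using ess_pos[OF E2(1)] b(4) by fastforce
      then have "hd e \<noteq> 2" using e'(2) b F2(2) by (simp add: sh_def hd_map)
      ultimately show "chunk e \<and> \<not> PA e" by (simp add: PA_def)
    qed
  qed
qed

lemma F4: "length bs = r" "length (filter id bs) = f" "length (filter Not bs) = r - f" "bs ! 0"
proof -
  show lb: "length bs = r" by (simp add: bs_def bl_def)
  have r1: "r \<ge> 1" using f1 fr by simp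
  have "length (filter id bs) = card {k. k < length bs \<and> id (bs ! k)}" by (rule length_filter_conv_card)
  also have "{k. k < length bs \<and> id (bs ! k)} = insert 0 S"
    using E3(1) r1 by (auto simp: bs_def bl_def)
  also have "card (insert 0 S) = f" using E3 f1 by (subst card_insert_disjoint) (auto intro: finite_subset)
  finally show f: "length (filter id bs) = f" .
  have "length (filter id bs) + length (filter (\<lambda>x. \<not> id x) bs) = length bs" by (rule sum_length_filter_compl)
  then show "length (filter Not bs) = r - f" using f lb by simp
  show "bs ! 0" using r1 by (simp add: bs_def bl_def)
qed

lemma lens: "length es1 = length (filter id bs)" "length es2 = length (filter Not bs)"
  using E1(3) F3(3) F4 by (auto simp: es1_def)

lemma F5: "set (mrg bs es1 es2) = set es1 \<union> set es2" "\<forall>e\<in>set (mrg bs es1 es2). chunk e"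
  "chk M = mrg bs es1 es2"
proof -
  show s: "set (mrg bs es1 es2) = set es1 \<union> set es2" using mrg_set[OF lens] .
  show c: "\<forall>e\<in>set (mrg bs es1 es2). chunk e" using s F1(1) F3(2) by auto
  show "chk M = mrg bs es1 es2" using exc_concat[OF c] by (simp add: chk_def M_def)
qed

lemma w2'_basic: "w2' \<noteq> []" "hd w2' = 1" "last w2' = 1" "treew w2'" "\<forall>x\<in>set w2'. 1 \<le> x"
proof -
  have b: "w2 \<noteq> []" "hd w2 = 1" "last w2 = 1" "treew w2" using ess_basic[OF E2(1)] by auto
  show "w2' \<noteq> []" "hd w2' = 1" "last w2' = 1" using b by (auto simp: w2'_def sh_def hd_map last_map)
  show "treew w2'" using tree_map[OF sh_inj2 b(1)] b(4) by (simp add: w2'_def)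
  show "\<forall>x\<in>set w2'. 1 \<le> x" using ess_pos[OF E2(1)] F2(2) by (auto simp: w2'_def sh_def)
qed

lemma decs: "w1 = 1 # concat es1" "w2' = 1 # concat es2"
  using w_dec(1)[OF E1(1,5)] walk_decomp(1)[OF w2'_basic(1-3)] by (auto simp: es1_def es2_def)

lemma F6: "set M = set w1 \<union> set w2'" "set (pairs M) = set (pairs w1) \<union> set (pairs w2')"
  "wedges M = wedges w1 \<union> wedges w2'"
proof -
  have "set M = insert 1 (\<Union> (set ` (set es1 \<union> set es2)))" by (simp add: M_def F5(1))
  moreover have "set w1 = set (1 # concat es1)" using decs(1) by (rule arg_cong)
  moreover have "set w2' = set (1 # concat es2)" using decs(2) by (rule arg_cong)
  ultimately show "set M = set w1 \<union> set w2'" by auto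
  have c1: "\<forall>e\<in>set es1. e \<noteq> [] \<and> last e = 1" using F1(1) by (auto simp: chunk_def)
  have c2: "\<forall>e\<in>set es2. e \<noteq> [] \<and> last e = 1" using F3(2) by (auto simp: chunk_def)
  have c: "\<forall>e\<in>set (mrg bs es1 es2). e \<noteq> [] \<and> last e = 1" using F5(1) c1 c2 by auto
  have "set (pairs M) = (\<Union>e\<in>set (mrg bs es1 es2). set (pairs (1 # e)))"
    unfolding M_def using pairs_concat[OF c] by simp
  moreover have "set (pairs w1) = (\<Union>e\<in>set es1. set (pairs (1 # e)))"
  proof -
    have "set (pairs w1) = set (pairs (1 # concat es1))" using decs(1) by (rule arg_cong)
    also have "\<dots> = set (concat (map (\<lambda>e. pairs (1 # e)) es1))" by (simp only: pairs_concat[OF c1])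
    finally show ?thesis by simp
  qed
  moreover have "set (pairs w2') = (\<Union>e\<in>set es2. set (pairs (1 # e)))"
  proof -
    have "set (pairs w2') = set (pairs (1 # concat es2))" using decs(2) by (rule arg_cong)
    also have "\<dots> = set (concat (map (\<lambda>e. pairs (1 # e)) es2))" by (simp only: pairs_concat[OF c2])
    finally show ?thesis by simp
  qed
  ultimately show sp: "set (pairs M) = set (pairs w1) \<union> set (pairs w2')" using F5(1) by auto
  show "wedges M = wedges w1 \<union> wedges w2'" by (simp add: wedges_pairs sp image_Un)
qed

lemma F7: "closed_walk M" "treew M"
proof -
  have pos1: "\<forall>x\<in>set w1. 0 < x" using F2(1) by auto
  have pos2: "\<forall>x\<in>set w2'. 0 < x" using w2'_basic(5) by auto
  have "\<forall>x\<in>set (concat (mrg bs es1 es2)). 0 < x"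
    using F6(1) pos1 pos2 by (auto simp: M_def)
  then show "closed_walk M" unfolding M_def by (rule cw_concat[OF F5(2)])
  have t1: "treew w1" using ess_basic(5)[OF E1(1)] .
  have t2: "treew w2'" using w2'_basic(4) .
  have ne1: "w1 \<noteq> []" using ess_basic(1)[OF E1(1)] .
  have nl: "noloop M" using t1 t2 ne1 w2'_basic(1) tree_iff F6(2) unfolding noloop_def by blast
  have int: "set w1 \<inter> set w2' \<subseteq> {1}"
  proof
    fix x assume x: "x \<in> set w1 \<inter> set w2'"
    then have "x \<le> m" using F2(1) by auto
    moreover obtain y where y: "y \<in> set w2" "x = sh m y" using x by (auto simp: w2'_def)
    moreover have "y \<ge> 1" using ess_pos[OF E2(1) y(1)] .
    ultimately show "x \<in> {1}" by (cases "y = 1") (auto simp: sh_def)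
  qed
  have nc: "\<not> has_cycle (set w1 \<union> set w2') (wedges w1 \<union> wedges w2')"
    by (rule glue_no_cycle[OF _ _ int]) (use t1 t2 ne1 w2'_basic(1) tree_iff simple_iff in auto)
  have "M \<noteq> []" by (simp add: M_def)
  then show "treew M" using tree_iff nl nc F6(1,3) by simp
qed

lemma F8: "3 \<le> length M" "M ! 1 = 2"
proof -
  obtain e es1' where ee: "es1 = e # es1'" using F1(2) by (cases es1) auto
  obtain bs' where bb: "bs = True # bs'" using F4(1,4) f1 fr by (cases bs) auto
  have e: "chunk e" "PA e" using F1(1) ee by auto
  have "e \<in> set (chk w1)" using ee es1_def by simp
  then obtain b where b: "e = b @ [1]" "b \<noteq> []" using chunk_shape[OF E1(1,5)] by metis
  have "M = 1 # b @ [1] @ concat (mrg bs' es1' es2)" using ee bb b by (simp add: M_def)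
  then show "3 \<le> length M" "M ! 1 = 2" using b e(2) by (auto simp: PA_def hd_conv_nth nth_append Suc_le_eq)
qed


lemma G1: "essential (canon M)" "length (canon M) = length M" "3 \<le> length (canon M)"
proof -
  show "essential (canon M)" using canon_ess[OF F7] .
  show "length (canon M) = length M" by (simp add: canon_def)
  then show "3 \<le> length (canon M)" using F8(1) by simp
qed

lemma G2: "cg M 1 = 1" "cg M 2 = 2" "\<forall>x\<in>set M. cg M x = 1 \<longleftrightarrow> x = 1" "1 \<in> set M" "2 \<in> set M"
proof -
  have hM: "M \<noteq> []" "hd M = 1" by (auto simp: M_def)
  show g1: "cg M 1 = 1" using cg_hd[OF hM(1)] hM(2) by simp
  obtain rest where Mr: "M = 1 # 2 # rest" using F8 by (cases M; cases "tl M") (auto simp: M_def)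
  show "cg M 2 = 2" using cg_second[OF Mr] by simp
  show o: "1 \<in> set M" using Mr by simp
  show "2 \<in> set M" using Mr by simp
  show "\<forall>x\<in>set M. cg M x = 1 \<longleftrightarrow> x = 1"
  proof
    fix x assume x: "x \<in> set M"
    show "cg M x = 1 \<longleftrightarrow> x = 1"
    proof
      assume "cg M x = 1"
      then have "cg M x = cg M 1" using g1 by simp
      then show "x = 1" using inj_onD[OF cg_inj _ x o] by blast
    qed (use g1 in simp)
  qed
qed

lemma G3: "chk (canon M) = map (map (cg M)) (mrg bs es1 es2)"
  using canon_chk[of M] F5(3) by (simp add: M_def)

lemma G4: "e \<in> set (mrg bs es1 es2) \<Longrightarrow> PA (map (cg M) e) \<longleftrightarrow> PA e"
proof -
  assume e: "e \<in> set (mrg bs es1 es2)"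
  then have ne: "e \<noteq> []" using F5(2) by (auto simp: chunk_def)
  have "hd e \<in> set e" using ne by simp
  then have "hd e \<in> set M" using e by (auto simp: M_def)
  then have "cg M (hd e) = cg M 2 \<longleftrightarrow> hd e = 2" using cg_inj[of M] G2(5) by (auto dest: inj_onD)
  then show ?thesis using ne G2(2) by (simp add: PA_def hd_map)
qed

lemma G5: "filter PA (chk (canon M)) = map (map (cg M)) es1"
  "filter (\<lambda>e. \<not> PA e) (chk (canon M)) = map (map (cg M)) es2"
  "map PA (chk (canon M)) = bs"
proof -
  have mf: "filter PA (mrg bs es1 es2) = es1 \<and> filter (\<lambda>z. \<not> PA z) (mrg bs es1 es2) = es2 \<and> map PA (mrg bs es1 es2) = bs"
    by (rule mrg_filter[OF lens]) (use F1(1) F3(2) in auto)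
  have c1: "filter (PA \<circ> map (cg M)) (mrg bs es1 es2) = filter PA (mrg bs es1 es2)"
    by (rule filter_cong) (auto simp: G4)
  have c2: "filter ((\<lambda>e. \<not> PA e) \<circ> map (cg M)) (mrg bs es1 es2) = filter (\<lambda>e. \<not> PA e) (mrg bs es1 es2)"
    by (rule filter_cong) (auto simp: G4)
  show "filter PA (chk (canon M)) = map (map (cg M)) es1"
    unfolding G3 filter_map c1 using mf by simp
  show "filter (\<lambda>e. \<not> PA e) (chk (canon M)) = map (map (cg M)) es2"
    unfolding G3 filter_map c2 using mf by simp
  have "map PA (chk (canon M)) = map PA (mrg bs es1 es2)"
    unfolding G3 by (auto simp: G4)
  then show "map PA (chk (canon M)) = bs" using mf by simp
qed

lemma G6: "Aw (canon M) = map (cg M) w1" "Bw (canon M) = map (cg M) w2'"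
proof -
  have "map (cg M) w1 = map (cg M) (1 # concat es1)" using decs(1) by (rule arg_cong)
  also have "\<dots> = 1 # concat (map (map (cg M)) es1)" using G2(1) by (simp add: map_concat)
  finally show "Aw (canon M) = map (cg M) w1" by (simp add: Aw_def G5(1))
  have "map (cg M) w2' = map (cg M) (1 # concat es2)" using decs(2) by (rule arg_cong)
  also have "\<dots> = 1 # concat (map (map (cg M)) es2)" using G2(1) by (simp add: map_concat)
  finally show "Bw (canon M) = map (cg M) w2'" by (simp add: Bw_def G5(2))
qed

lemma G8: "Psi (canon M) = (w1, w2, S)"
proof -
  have i1: "inj_on (cg M) (set w1)" using cg_inj[of M] F6(1) by (metis inj_on_Un)
  have "canon (map (cg M) w1) = w1" using canon_map[OF i1] canon_id[OF ess_basic(7)[OF E1(1)]] by simp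
  moreover have "canon (map (cg M) w2') = w2"
  proof -
    have i2: "inj_on (cg M) (sh m ` set w2)" using cg_inj[of M] F6(1) by (metis inj_on_Un list.set_map w2'_def)
    have "inj_on (cg M \<circ> sh m) (set w2)" using comp_inj_on[OF sh_inj2 i2] .
    then have "canon (map (cg M \<circ> sh m) w2) = w2" using canon_map canon_id[OF ess_basic(7)[OF E2(1)]] by metis
    then show ?thesis by (simp add: w2'_def)
  qed
  moreover have "{k. 1 \<le> k \<and> k < length (chk (canon M)) \<and> PA (chk (canon M) ! k)} = S"
  proof -
    have lc: "length (chk (canon M)) = r" using G5(3) F4(1) by (metis length_map)
    have "PA (chk (canon M) ! k) = bs ! k" if "k < r" for k
      using G5(3) that lc by (metis nth_map)
    then have "{k. 1 \<le> k \<and> k < length (chk (canon M)) \<and> PA (chk (canon M) ! k)} = {k. 1 \<le> k \<and> k < r \<and> bs ! k}"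
      using lc by auto
    also have "\<dots> = S" using E3(1) by (auto simp: bs_def bl_def)
    finally show ?thesis .
  qed
  ultimately show ?thesis by (simp add: Psi_def G6)
qed

lemma G9: "canon M \<in> Lam1 l r u f"
proof -
  note e = G1(1) and l3 = G1(3)
  have lA: "length (Aw (canon M)) = 2 * (f + u) + 1" using G6(1) E1(2) by simp
  have lB: "length (Bw (canon M)) = 2 * (l - u - f) + 1" using G6(2) E2(2) by (simp add: w2'_def)
  have len: "length (canon M) = 2 * l + 1" using length_AB[OF e l3] lA lB f1 fr ur by simp
  have b: "canon M \<noteq> []" "hd (canon M) = 1" "last (canon M) = 1" using ess_basic[OF e] by auto
  have rc: "card {i. i < 2 * l \<and> canon M ! i = 1} = r"
    using root_count[OF b] len G5(3) F4(1) by (metis add_diff_cancel_right' length_map)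
  have fa: "length (filter PA (chk (canon M))) = f" using G5(1) E1(3) by (simp add: es1_def)
  have cF: "card {i. i < 2 * l \<and> canon M ! i = 1 \<and> canon M ! (i + 1) = 2} = f"
    using cF_count[OF e l3] len fa by simp
  have cG: "card {i. i < 2 * l \<and> {canon M ! i, canon M ! (i + 1)} \<in> G2edges (canon M)} = 2 * u"
    using cG_count[OF e l3] len fa lA by simp
  have l0: "0 < l" using f1 fr ur by simp
  show ?thesis unfolding Lam1_def Lam_def using e len rc cF cG l0 by simp
qed
end


lemma Psi_Phi_T:
  assumes t: "t \<in> Tset l r u f" and f1: "1 \<le> f" and fr: "f \<le> r" and ur: "u + r \<le> l"
  shows "Phi r t \<in> Lam1 l r u f" "Psi (Phi r t) = t"
proof -
  obtain w1 w2 S where tt: "t = (w1, w2, S)" by (cases t) auto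
  have M: "Mrg r (w1, w2, S) = 1 # concat (mrg (bl r S) (chk w1) (chk (map (sh (card (set w1))) w2)))"
    by (simp add: Mrg_def)
  note G9' = G9[OF t[unfolded tt] f1 fr ur refl refl refl refl refl refl]
  note G8' = G8[OF t[unfolded tt] f1 fr ur refl refl refl refl refl refl]
  show "Phi r t \<in> Lam1 l r u f" unfolding tt Phi_def M by (rule G9')
  show "Psi (Phi r t) = t" unfolding tt Phi_def M by (rule G8')
qed

lemma Psi_bij:
  assumes f1: "1 \<le> f" and fr: "f \<le> r" and ur: "u + r \<le> l"
  shows "bij_betw Psi (Lam1 l r u f) (Tset l r u f)"
proof (rule bij_betw_byWitness[where f' = "Phi r"])
  show "\<forall>a\<in>Lam1 l r u f. Phi r (Psi a) = a" using Phi_Psi by blast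
  show "\<forall>a'\<in>Tset l r u f. Psi (Phi r a') = a'" using Psi_Phi_T(2)[OF _ f1 fr ur] by blast
  show "Psi ` Lam1 l r u f \<subseteq> Tset l r u f" using Psi_in_T by blast
  show "Phi r ` Tset l r u f \<subseteq> Lam1 l r u f" using Psi_Phi_T(1)[OF _ f1 fr ur] by blast
qed

lemma card_Ssets: "card {S. S \<subseteq> {1..<r} \<and> card S = f - 1} = (r - 1) choose (f - 1)"
  using n_subsets[of "{1..<r}" "f - 1"] by simp

lemma sum_Tset:
  "(\<Sum>t\<in>Tset l r u f. c * g (fst t) * h (fst (snd t))) =
     c * real ((r - 1) choose (f - 1)) * (\<Sum>a\<in>Lam2 (f + u) f. g a) * (\<Sum>b\<in>Lam (l - u - f) (r - f). h b)"
proof -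
  define A where "A = Lam2 (f + u) f"
  define B where "B = Lam (l - u - f) (r - f)"
  define C where "C = {S. S \<subseteq> {1..<r} \<and> card S = f - 1}"
  have "(\<Sum>t\<in>A \<times> B \<times> C. c * g (fst t) * h (fst (snd t))) =
        (\<Sum>(a, bc)\<in>A \<times> (B \<times> C). c * g a * h (fst bc))"
    by (simp add: split_def)
  also have "\<dots> = (\<Sum>a\<in>A. \<Sum>bc\<in>B \<times> C. c * g a * h (fst bc))"
    by (rule sum.cartesian_product[symmetric])
  also have "\<dots> = (\<Sum>a\<in>A. \<Sum>b\<in>B. \<Sum>S\<in>C. c * g a * h b)"
  proof (intro sum.cong refl)
    fix a
    have "(\<Sum>bc\<in>B \<times> C. c * g a * h (fst bc)) = (\<Sum>(b, S)\<in>B \<times> C. c * g a * h b)"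
      by (simp add: split_def)
    also have "\<dots> = (\<Sum>b\<in>B. \<Sum>S\<in>C. c * g a * h b)" by (rule sum.cartesian_product[symmetric])
    finally show "(\<Sum>bc\<in>B \<times> C. c * g a * h (fst bc)) = (\<Sum>b\<in>B. \<Sum>S\<in>C. c * g a * h b)" .
  qed
  also have "\<dots> = (\<Sum>a\<in>A. \<Sum>b\<in>B. real (card C) * (c * g a * h b))" by simp
  also have "\<dots> = c * real (card C) * (\<Sum>a\<in>A. g a) * (\<Sum>b\<in>B. h b)"
    by (simp add: sum_distrib_left sum_distrib_right algebra_simps)
  finally show ?thesis using card_Ssets by (simp add: Tset_def A_def B_def C_def)
qed

lemma Lam1_sum:
  assumes f1: "1 \<le> f" and fr: "f \<le> r" and ur: "u + r \<le> l" and a0: "\<alpha> \<noteq> 0" "\<alpha> \<noteq> 1"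
  shows "Ssum (theta1 \<alpha> p X) (Lam1 l r u f) =
           inverse \<alpha> * real ((r - 1) choose (f - 1)) *
           Ssum (theta1 \<alpha> p X) (Lam2 (f + u) f) * Ssum (theta1 \<alpha> p X) (Lam (l - u - f) (r - f))"
    "Ssum (theta2 \<alpha> p X) (Lam1 l r u f) =
           inverse (1 - \<alpha>) * real ((r - 1) choose (f - 1)) *
           Ssum (theta2 \<alpha> p X) (Lam2 (f + u) f) * Ssum (theta2 \<alpha> p X) (Lam (l - u - f) (r - f))"
proof -
  have b: "bij_betw Psi (Lam1 l r u f) (Tset l r u f)" using Psi_bij[OF f1 fr ur] .
  have e1: "theta1 \<alpha> p X w = inverse \<alpha> * theta1 \<alpha> p X (fst (Psi w)) * theta1 \<alpha> p X (fst (snd (Psi w)))"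
    if w: "w \<in> Lam1 l r u f" for w
  proof -
    have "theta1 \<alpha> p X w * \<alpha> = theta1 \<alpha> p X (fst (Psi w)) * theta1 \<alpha> p X (fst (snd (Psi w)))"
      using theta_AB(1)[OF Lam1_props(1,4)[OF w] a0] by (simp add: Psi_def)
    then show ?thesis using a0 by (simp add: field_simps)
  qed
  have e2: "theta2 \<alpha> p X w = inverse (1 - \<alpha>) * theta2 \<alpha> p X (fst (Psi w)) * theta2 \<alpha> p X (fst (snd (Psi w)))"
    if w: "w \<in> Lam1 l r u f" for w
  proof -
    have "theta2 \<alpha> p X w * (1 - \<alpha>) = theta2 \<alpha> p X (fst (Psi w)) * theta2 \<alpha> p X (fst (snd (Psi w)))"
      using theta_AB(2)[OF Lam1_props(1,4)[OF w] a0] by (simp add: Psi_def)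
    moreover have "1 - \<alpha> \<noteq> 0" using a0 by simp
    ultimately show ?thesis by (simp add: field_simps)
  qed
  have "Ssum (theta1 \<alpha> p X) (Lam1 l r u f) =
        (\<Sum>w\<in>Lam1 l r u f. (\<lambda>t. inverse \<alpha> * theta1 \<alpha> p X (fst t) * theta1 \<alpha> p X (fst (snd t))) (Psi w))"
    unfolding Ssum_def using e1 by (intro sum.cong refl) simp
  also have "\<dots> = (\<Sum>t\<in>Tset l r u f. inverse \<alpha> * theta1 \<alpha> p X (fst t) * theta1 \<alpha> p X (fst (snd t)))"
    by (rule sum.reindex_bij_betw[OF b])
  finally show "Ssum (theta1 \<alpha> p X) (Lam1 l r u f) =
           inverse \<alpha> * real ((r - 1) choose (f - 1)) *
           Ssum (theta1 \<alpha> p X) (Lam2 (f + u) f) * Ssum (theta1 \<alpha> p X) (Lam (l - u - f) (r - f))"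
    by (simp add: sum_Tset Ssum_def)
  have "Ssum (theta2 \<alpha> p X) (Lam1 l r u f) =
        (\<Sum>w\<in>Lam1 l r u f. (\<lambda>t. inverse (1 - \<alpha>) * theta2 \<alpha> p X (fst t) * theta2 \<alpha> p X (fst (snd t))) (Psi w))"
    unfolding Ssum_def using e2 by (intro sum.cong refl) simp
  also have "\<dots> = (\<Sum>t\<in>Tset l r u f. inverse (1 - \<alpha>) * theta2 \<alpha> p X (fst t) * theta2 \<alpha> p X (fst (snd t)))"
    by (rule sum.reindex_bij_betw[OF b])
  finally show "Ssum (theta2 \<alpha> p X) (Lam1 l r u f) =
           inverse (1 - \<alpha>) * real ((r - 1) choose (f - 1)) *
           Ssum (theta2 \<alpha> p X) (Lam2 (f + u) f) * Ssum (theta2 \<alpha> p X) (Lam (l - u - f) (r - f))"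
    by (simp add: sum_Tset Ssum_def)
qed

section \<open>Partition of Lam\<close>

lemma finite_Lam: "finite (Lam l r)"
proof -
  have "Lam l r \<subseteq> {xs. set xs \<subseteq> {0..2 * l + 1} \<and> length xs = 2 * l + 1}"
  proof
    fix w assume w: "w \<in> Lam l r"
    then have e: "essential w" "length w = 2 * l + 1" by (auto simp: Lam_def)
    have "\<forall>x\<in>set w. x \<le> 2 * l + 1"
    proof
      fix x assume "x \<in> set w"
      then have "x \<le> card (set w)" using minimal_le ess_basic(7)[OF e(1)] by blast
      also have "\<dots> \<le> length w" by (rule card_length)
      finally show "x \<le> 2 * l + 1" using e by simp
    qed
    then show "w \<in> {xs. set xs \<subseteq> {0..2 * l + 1} \<and> length xs = 2 * l + 1}" using e by auto
  qed
  moreover have "finite {xs. set xs \<subseteq> {0..2 * l + 1} \<and> length xs = (2 * l + 1 :: nat)}"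
    by (rule finite_lists_length_eq) simp
  ultimately show ?thesis by (rule finite_subset)
qed

lemma even_concat: "\<forall>e\<in>set es. even (length e) \<Longrightarrow> even (length (concat es))"
  by (induction es) auto

lemma len_concat_ge2: "\<forall>e\<in>set es. 2 \<le> length e \<Longrightarrow> 2 * length es \<le> length (concat es)"
  by (induction es) auto

definition cFw :: "nat \<Rightarrow> nat list \<Rightarrow> nat" where
  "cFw l w = card {i. i < 2 * l \<and> w ! i = 1 \<and> w ! (i + 1) = 2}"

definition cGw :: "nat \<Rightarrow> nat list \<Rightarrow> nat" where
  "cGw l w = card {i. i < 2 * l \<and> {w ! i, w ! (i + 1)} \<in> G2edges w}"

lemma Lam_params:
  assumes w: "w \<in> Lam l r" and lr: "(l, r) \<noteq> (0, 0)"
  shows "0 < l" "1 \<le> cFw l w" "cFw l w \<le> r" "even (cGw l w)" "cGw l w div 2 + r \<le> l"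
proof -
  have h: "essential w" "length w = 2 * l + 1" "card {i. i < 2 * l \<and> w ! i = 1} = r"
    using w by (auto simp: Lam_def)
  show l0: "0 < l"
  proof (rule ccontr)
    assume "\<not> 0 < l"
    then have "l = 0" by simp
    then have "r = 0" using h(3) by simp
    then show False using lr \<open>l = 0\<close> by simp
  qed
  have l3: "3 \<le> length w" using h l0 by simp
  have bb: "w \<noteq> []" "hd w = 1" "last w = 1" using ess_basic[OF h(1)] by auto
  have rr: "length (chk w) = r" using root_count[OF bb] h by simp
  have cf: "cFw l w = length (filter PA (chk w))" using cF_count[OF h(1) l3] h by (simp add: cFw_def)
  have cg: "cGw l w + 2 * cFw l w = length (Aw w) - 1" using cG_count[OF h(1) l3] h cf by (simp add: cFw_def cGw_def)
  have "PA (hd (chk w))" using hd_chk[OF h(1) l3] by (simp add: PA_def)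
  then have "hd (chk w) \<in> set (filter PA (chk w))" using chk_ne[OF h(1) l3] by simp
  then have "filter PA (chk w) \<noteq> []" by (metis empty_iff list.set(1))
  then show "1 \<le> cFw l w" using cf by (simp add: Suc_le_eq)
  show "cFw l w \<le> r" using cf rr length_filter_le[of PA "chk w"] by simp
  have ev: "\<forall>e\<in>set (chk w). even (length e)" using chunks_even[OF h(1) l3] by blast
  have "even (length (concat (filter PA (chk w))))" by (rule even_concat) (use ev in auto)
  then have "even (length (Aw w) - 1)" by (simp add: Aw_def)
  then show "even (cGw l w)" using cg by presburger
  have ge2: "\<forall>e\<in>set (chk w). 2 \<le> length e"
  proof
    fix e assume e: "e \<in> set (chk w)"
    obtain b where b: "e = b @ [1]" "b \<noteq> []" using chunk_shape[OF h(1) l3 e] by metis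
    then show "2 \<le> length e" by (cases b) auto
  qed
  have "2 * length (filter (\<lambda>e. \<not> PA e) (chk w)) \<le> length (concat (filter (\<lambda>e. \<not> PA e) (chk w)))"
    by (rule len_concat_ge2) (use ge2 in auto)
  moreover have "length (filter (\<lambda>e. \<not> PA e) (chk w)) = r - cFw l w"
    using sum_length_filter_compl[of PA "chk w"] cf rr by simp
  moreover have "length (Bw w) = 1 + length (concat (filter (\<lambda>e. \<not> PA e) (chk w)))" by (simp add: Bw_def)
  moreover have "length w + 1 = length (Aw w) + length (Bw w)" using length_AB[OF h(1) l3] .
  moreover have "length (Aw w) \<ge> 1" by (simp add: Aw_def)
  moreover have "cFw l w \<le> r" using cf rr length_filter_le[of PA "chk w"] by simp
  ultimately show "cGw l w div 2 + r \<le> l" using cg h(2) \<open>even (cGw l w)\<close> by (elim evenE) linarith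
qed

lemma Lam_partition:
  fixes \<theta> :: "nat list \<Rightarrow> real"
  assumes lr: "(l, r) \<noteq> (0, 0)"
  shows "Ssum \<theta> (Lam l r) = (\<Sum>f\<in>{1..r}. \<Sum>u\<in>{u. u + r \<le> l}. Ssum \<theta> (Lam1 l r u f))"
proof -
  have finU: "finite {u. u + r \<le> l}" by (rule finite_subset[of _ "{..l}"]) auto
  have L1: "Lam1 l r u f = Lam l r \<inter> {w. 0 < l \<and> 2 * u = cGw l w \<and> f = cFw l w}" for u f
    by (auto simp: Lam1_def cGw_def cFw_def)
  have "(\<Sum>f\<in>{1..r}. \<Sum>u\<in>{u. u + r \<le> l}. Ssum \<theta> (Lam1 l r u f)) =
        (\<Sum>f\<in>{1..r}. \<Sum>u\<in>{u. u + r \<le> l}. \<Sum>w\<in>Lam l r.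
            if 0 < l \<and> 2 * u = cGw l w \<and> f = cFw l w then \<theta> w else 0)"
    unfolding Ssum_def L1 by (simp add: sum.inter_restrict[OF finite_Lam])
  also have "\<dots> = (\<Sum>w\<in>Lam l r. \<Sum>f\<in>{1..r}. \<Sum>u\<in>{u. u + r \<le> l}.
            if 0 < l \<and> 2 * u = cGw l w \<and> f = cFw l w then \<theta> w else 0)"
  proof -
    have "(\<Sum>f\<in>{1..r}. \<Sum>u\<in>{u. u + r \<le> l}. \<Sum>w\<in>Lam l r.
            if 0 < l \<and> 2 * u = cGw l w \<and> f = cFw l w then \<theta> w else 0) =
          (\<Sum>f\<in>{1..r}. \<Sum>w\<in>Lam l r. \<Sum>u\<in>{u. u + r \<le> l}.
            if 0 < l \<and> 2 * u = cGw l w \<and> f = cFw l w then \<theta> w else 0)"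
      by (intro sum.cong refl) (rule sum.swap)
    also have "\<dots> = (\<Sum>w\<in>Lam l r. \<Sum>f\<in>{1..r}. \<Sum>u\<in>{u. u + r \<le> l}.
            if 0 < l \<and> 2 * u = cGw l w \<and> f = cFw l w then \<theta> w else 0)"
      by (rule sum.swap)
    finally show ?thesis .
  qed
  also have "\<dots> = (\<Sum>w\<in>Lam l r. \<theta> w)"
  proof (rule sum.cong[OF refl])
    fix w assume w: "w \<in> Lam l r"
    note P = Lam_params[OF w lr]
    have "(\<Sum>f\<in>{1..r}. \<Sum>u\<in>{u. u + r \<le> l}.
            if 0 < l \<and> 2 * u = cGw l w \<and> f = cFw l w then \<theta> w else 0) =
          (\<Sum>f\<in>{1..r}. if f = cFw l w then (\<Sum>u\<in>{u. u + r \<le> l}. if u = cGw l w div 2 then \<theta> w else 0) else 0)"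
    proof (intro sum.cong refl)
      fix f assume "f \<in> {1..r}"
      show "(\<Sum>u\<in>{u. u + r \<le> l}. if 0 < l \<and> 2 * u = cGw l w \<and> f = cFw l w then \<theta> w else 0) =
            (if f = cFw l w then (\<Sum>u\<in>{u. u + r \<le> l}. if u = cGw l w div 2 then \<theta> w else 0) else 0)"
        using P(1,4) by (auto intro!: sum.cong elim!: evenE)
    qed
    also have "\<dots> = \<theta> w" using P finU by (simp add: sum.delta)
    finally show "(\<Sum>f\<in>{1..r}. \<Sum>u\<in>{u. u + r \<le> l}.
            if 0 < l \<and> 2 * u = cGw l w \<and> f = cFw l w then \<theta> w else 0) = \<theta> w" .
  qed
  finally show ?thesis by (simp add: Ssum_def)
qed

theorem lemma1:
  fixes \<alpha> p :: real and X :: "nat \<Rightarrow> real" and l r :: nat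
  assumes "0 < \<alpha>" and "\<alpha> < 1" and "0 < p" and "(l, r) \<noteq> (0, 0)"
  shows "Ssum (theta1 \<alpha> p X) (Lam l r) =
           (\<Sum>f\<in>{1..r}. \<Sum>u\<in>{u. u + r \<le> l}. Ssum (theta1 \<alpha> p X) (Lam1 l r u f)) \<and>
         Ssum (theta2 \<alpha> p X) (Lam l r) =
           (\<Sum>f\<in>{1..r}. \<Sum>u\<in>{u. u + r \<le> l}. Ssum (theta2 \<alpha> p X) (Lam1 l r u f)) \<and>
         (\<forall>u f. 1 \<le> f \<and> f \<le> r \<and> u + r \<le> l \<longrightarrow>
           Ssum (theta1 \<alpha> p X) (Lam1 l r u f) =
             inverse \<alpha> * real ((r - 1) choose (f - 1)) *
             Ssum (theta1 \<alpha> p X) (Lam2 (f + u) f) *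
             Ssum (theta1 \<alpha> p X) (Lam (l - u - f) (r - f))) \<and>
         (\<forall>u f. 1 \<le> f \<and> f \<le> r \<and> u + r \<le> l \<longrightarrow>
           Ssum (theta2 \<alpha> p X) (Lam1 l r u f) =
             inverse (1 - \<alpha>) * real ((r - 1) choose (f - 1)) *
             Ssum (theta2 \<alpha> p X) (Lam2 (f + u) f) *
             Ssum (theta2 \<alpha> p X) (Lam (l - u - f) (r - f)))"
proof -
  have a0: "\<alpha> \<noteq> 0" "\<alpha> \<noteq> 1" using assms by auto
  show ?thesis
    using Lam_partition[OF assms(4)] Lam1_sum[OF _ _ _ a0] by blast
qed


end
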